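(* Assume Assumption 1 holds, fix any prediction function $\mathcal C$, and let $\hat C(X_{n+1})$ be produced by the standard label-conditional conformal method applied to the contaminated data $\mathcal D$. Suppose that, almost surely, for all $t\in\mathbb R$ and $k\in[K]$, $$\max_{l\neq k}F^k_l(t)\le F^k_k(t).$$ Then $\Delta_k(\hat\tau_k)\ge0$ almost surely for every $k\in[K]$, and hence $\mathbb P[Y_{n+1}\in\hat C(X_{n+1})\mid Y_{n+1}=k]\ge1-\alpha$ for every $k\in[K]$.
   Context: Let $K\ge 2$, $d\ge 1$, $n\ge 2$ be integers and $[m]=\{1,\dots,m\}$. Let $(X_i,Y_i,\tilde Y_i)$, $i\in[n+1]$, be i.i.d. copies of a random triple $(X,Y,\tilde Y)$ with $X\in\mathbb R^d$, true (unobserved) label $Y\in[K]$ and observed, possibly contaminated, label $\tilde Y\in[K]$. The observed data are $\mathcal D=\{(X_i,\tilde Y_i)\}_{i\in[n]}$; $X_{n+1}$ is a test feature vector with unknown label $Y_{n+1}$. The index set $[n]$ is split, independently of all data, into disjoint nonempty sets $\mathcal D^{\mathrm{train}}$ and $\mathcal D^{\mathrm{cal}}$, and a classifier $\hat\pi$ is fitted using only the observations indexed by $\mathcal D^{\mathrm{train}}$. A prediction function is a map $\mathcal C$ (which may depend on $\hat\pi$) assigning to each $x\in\mathbb R^d$ and $\tau=(\tau_1,\dots,\tau_K)\in[0,1]^K$ a set $\mathcal C(x,\tau)\subseteq[K]$ such that: $\mathcal C(x,\tau)$ is nondecreasing (for inclusion) in each coordinate of $\tau$; whether $k\in\mathcal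 C(x,\tau)$ depends on $\tau$ only through $\tau_k$; and $k\in\mathcal C(x,\tau)$ whenever $\tau_k=1$. The associated conformity score is $\hat s(x,k)=\inf\{\tau_k\in[0,1]: k\in\mathcal C(x,\tau)\}$, and it is understood that $k\in\mathcal C(x,\tau)$ if and only if $\hat s(x,k)\le\tau_k$. Let $\alpha\in(0,1)$. For $k\in[K]$ let $\mathcal D^{\mathrm{cal}}_k=\{i\in\mathcal D^{\mathrm{cal}}:\tilde Y_i=k\}$ and $n_k=|\mathcal D^{\mathrm{cal}}_k|$. All probabilities and expectations are conditional on the split and on $(n_1,\dots,n_K)$, which are treated as fixed with $n_k\ge1$ for all $k$; $n_*=\min_k n_k$. For $k,l\in[K]$ and $t\in\mathbb R$, let $F^k_l(t)=\mathbb P[\hat s(X,k)\le t\mid Y=l,\mathcal D^{\mathrm{train}}]$ and $\tilde F^k_l(t)=\mathbb P[\hat s(X,k)\le t\mid \tilde Y=l,\mathcal D^{\mathrm{train}}]$, where $(X,Y,\tilde Y)$ is a fresh independent copy; the coverage inflation factor is $\Delta_k(t)=F^k_k(t)-\tilde F^k_k(t)$. Standard label-conditional conformal method: for each $k$, $\hat\tau_k$ is the $\lceil(1+n_k)(1-\alpha)\rceil$-th smallest value in $\{\hat s(X_i,k):i\in\mathcal D^{\mathrm{cal}}_k\}$ (with $\hat\tau_k=1$ if $\lceil(1+n_k)(1-\alpha)\rceil>n_k$), and $\hat C(X_{n+1})=\mathcal C(X_{n+1},\hat\tau)$ with $\hat\tau=(\hat\tau_1,\dots,\hat\tau_K)$.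 Assumption 1 (linear contamination): $\tilde Y$ is conditionally independent of $X$ given $Y$; all classes have positive probability under both $Y$ and $\tilde Y$. Let $M\in[0,1]^{K\times K}$, $M_{kl}=\mathbb P[Y=l\mid\tilde Y=k]$ (rows of $M$ sum to $1$). *)

theory Defs
  imports "HOL-Probability.Probability"
begin

text \<open>Training data: a function on the training index set T (extensional),
  giving the observed pairs (X_i, Ytilde_i).\<close>

type_synonym ('x) tdata = "nat \<Rightarrow> 'x \<times> nat"

definition tau_box :: "nat \<Rightarrow> (nat \<Rightarrow> real) set" where
  "tau_box K = {\<tau>. \<forall>k\<in>{1..K}. \<tau> k \<in> {0..1}}"

definition prediction_function ::
  "nat \<Rightarrow> ('x tdata \<Rightarrow> 'x \<Rightarrow> (nat \<Rightarrow> real) \<Rightarrow> nat set) \<Rightarrow> bool" where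
  "prediction_function K C \<longleftrightarrow>
     (\<forall>D x \<tau>. \<tau> \<in> tau_box K \<longrightarrow> C D x \<tau> \<subseteq> {1..K}) \<and>
     (\<forall>D x \<tau> \<tau>'. \<tau> \<in> tau_box K \<longrightarrow> \<tau>' \<in> tau_box K \<longrightarrow>
        (\<forall>k\<in>{1..K}. \<tau> k \<le> \<tau>' k) \<longrightarrow> C D x \<tau> \<subseteq> C D x \<tau>') \<and>
     (\<forall>D x \<tau> \<tau>' k. \<tau> \<in> tau_box K \<longrightarrow> \<tau>' \<in> tau_box K \<longrightarrow> k \<in> {1..K} \<longrightarrow>
        \<tau> k = \<tau>' k \<longrightarrow> (k \<in> C D x \<tau> \<longleftrightarrow> k \<in> C D x \<tau>')) \<and>
     (\<forall>D x \<tau> k. \<tau> \<in> tau_box K \<longrightarrow> k \<in> {1..K} \<longrightarrow> \<tau> k = 1 \<longrightarrow> k \<in> C D x \<tau>)"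

text \<open>Conformity score: s(x,k) = inf { tau_k in [0,1] : k in C(x,tau) }.
  Since membership of k depends on tau only through tau_k, we evaluate C
  at the constant threshold vector.\<close>
definition conf_score ::
  "('x tdata \<Rightarrow> 'x \<Rightarrow> (nat \<Rightarrow> real) \<Rightarrow> nat set) \<Rightarrow> 'x tdata \<Rightarrow> 'x \<Rightarrow> nat \<Rightarrow> real" where
  "conf_score C D x k = Inf {t \<in> {0..1}. k \<in> C D x (\<lambda>_. t)}"

definition score_consistent ::
  "nat \<Rightarrow> ('x tdata \<Rightarrow> 'x \<Rightarrow> (nat \<Rightarrow> real) \<Rightarrow> nat set) \<Rightarrow> bool" where
  "score_consistent K C \<longleftrightarrow>
     (\<forall>D x \<tau> k. \<tau> \<in> tau_box K \<longrightarrow> k \<in> {1..K} \<longrightarrow>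
        (k \<in> C D x \<tau> \<longleftrightarrow> conf_score C D x k \<le> \<tau> k))"

definition conf_quantile :: "real \<Rightarrow> real list \<Rightarrow> real" where
  "conf_quantile \<alpha> vs =
     (let m = length vs; r = nat \<lceil>(1 + real m) * (1 - \<alpha>)\<rceil>
      in if r > m then 1 else sort vs ! (r - 1))"

text \<open>Law of a generic triple (X, Y, Ytilde): a measure on features x true label
  x observed label.  Conditional CDFs of a score function g given Y = l and
  given Ytilde = l.\<close>
definition cdf_true :: "('x \<times> nat \<times> nat) measure \<Rightarrow> ('x \<Rightarrow> real) \<Rightarrow> nat \<Rightarrow> real \<Rightarrow> real" where
  "cdf_true P g l t =
     measure P {z \<in> space P. g (fst z) \<le> t \<and> fst (snd z) = l} /
     measure P {z \<in> space P. fst (snd z) = l}"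

definition cdf_obs :: "('x \<times> nat \<times> nat) measure \<Rightarrow> ('x \<Rightarrow> real) \<Rightarrow> nat \<Rightarrow> real \<Rightarrow> real" where
  "cdf_obs P g l t =
     measure P {z \<in> space P. g (fst z) \<le> t \<and> snd (snd z) = l} /
     measure P {z \<in> space P. snd (snd z) = l}"

text \<open>Ytilde conditionally independent of X given the (discrete) Y.\<close>
definition cond_indep_obs :: "('x \<times> nat \<times> nat) measure \<Rightarrow> 'x set set \<Rightarrow> bool" where
  "cond_indep_obs P \<A> \<longleftrightarrow>
     (\<forall>A\<in>\<A>. \<forall>k l.
        measure P {z \<in> space P. fst z \<in> A \<and> fst (snd z) = l \<and> snd (snd z) = k}
          * measure P {z \<in> space P. fst (snd z) = l}
        = measure P {z \<in> space P. fst z \<in> A \<and> fst (snd z) = l}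
          * measure P {z \<in> space P. fst (snd z) = l \<and> snd (snd z) = k})"


definition triple_space :: "('x::topological_space \<times> nat \<times> nat) measure" where
  "triple_space = borel \<Otimes>\<^sub>M (count_space UNIV \<Otimes>\<^sub>M count_space UNIV)"

definition train_data :: "(nat \<Rightarrow> 'w \<Rightarrow> 'x) \<Rightarrow> (nat \<Rightarrow> 'w \<Rightarrow> nat) \<Rightarrow> nat set \<Rightarrow> 'w \<Rightarrow> 'x tdata" where
  "train_data X Yt T \<omega> = restrict (\<lambda>i. (X i \<omega>, Yt i \<omega>)) T"

definition lc_threshold ::
  "real \<Rightarrow> ('x tdata \<Rightarrow> 'x \<Rightarrow> (nat \<Rightarrow> real) \<Rightarrow> nat set) \<Rightarrow> (nat \<Rightarrow> 'w \<Rightarrow> 'x) \<Rightarrow>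
   (nat \<Rightarrow> 'w \<Rightarrow> nat) \<Rightarrow> nat set \<Rightarrow> nat set \<Rightarrow> 'w \<Rightarrow> nat \<Rightarrow> real" where
  "lc_threshold \<alpha> C X Yt T Cal \<omega> k =
     conf_quantile \<alpha>
       (map (\<lambda>i. conf_score C (train_data X Yt T \<omega>) (X i \<omega>) k)
            (filter (\<lambda>i. Yt i \<omega> = k) (sorted_list_of_set Cal)))"

end

theory Submission
  imports Defs
begin


lemma quantile_le_iff:
  fixes vs :: "real list"
  assumes "1 \<le> r" "r \<le> length vs"
  shows "s \<le> sort vs ! (r-1) \<longleftrightarrow> length (filter (\<lambda>v. v < s) vs) < r"
proof -
  define ws where "ws = sort vs"
  have sw: "sorted ws" and lw: "length ws = length vs" unfolding ws_def by auto
  have "length (filter (\<lambda>v. v < s) vs) = length (filter (\<lambda>v. v < s) ws)"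
    unfolding ws_def by (metis mset_filter mset_sort size_mset)
  also have "\<dots> = card {j. j < length ws \<and> ws!j < s}"
    by (simp add: length_filter_conv_card)
  finally have c: "length (filter (\<lambda>v. v < s) vs) = card {j. j < length ws \<and> ws!j < s}" .
  show ?thesis
  proof
    assume h: "s \<le> sort vs ! (r-1)"
    have "{j. j < length ws \<and> ws!j < s} \<subseteq> {..<r-1}"
    proof
      fix j assume "j \<in> {j. j < length ws \<and> ws!j < s}"
      then have j: "j < length ws" "ws!j < s" by auto
      show "j \<in> {..<r-1}"
      proof (rule ccontr)
        assume "j \<notin> {..<r-1}"
        then have "ws!(r-1) \<le> ws!j" using sw j assms lw by (intro sorted_nth_mono) auto
        then show False using h j ws_def by auto
      qed
    qed
    then have "card {j. j < length ws \<and> ws!j < s} \<le> card {..<r-1}"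
      by (intro card_mono) auto
    then have "card {j. j < length ws \<and> ws!j < s} \<le> r - 1" by simp
    then show "length (filter (\<lambda>v. v < s) vs) < r" using c assms by linarith
  next
    assume h: "length (filter (\<lambda>v. v < s) vs) < r"
    show "s \<le> sort vs ! (r-1)"
    proof (rule ccontr)
      assume "\<not> s \<le> sort vs ! (r-1)"
      then have hs: "ws!(r-1) < s" unfolding ws_def by auto
      have "{..<r} \<subseteq> {j. j < length ws \<and> ws!j < s}"
      proof
        fix j assume "j \<in> {..<r}"
        then have "j \<le> r - 1" "j < length ws" using assms lw by auto
        then have "ws!j \<le> ws!(r-1)" using sw assms lw by (intro sorted_nth_mono) auto
        then show "j \<in> {j. j < length ws \<and> ws!j < s}" using hs \<open>j < length ws\<close> by auto
      qed
      then have "card {..<r} \<le> card {j. j < length ws \<and> ws!j < s}"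
        by (intro card_mono) auto
      then have "r \<le> card {j. j < length ws \<and> ws!j < s}" by simp
      then show False using h c by linarith
    qed
  qed
qed


lemma exch_count:
  fixes S :: "'a set" and v :: "'a \<Rightarrow> real"
  assumes "finite S" "r \<le> card S"
  shows "r \<le> card {j\<in>S. card {i\<in>S. v i < v j} < r}"
proof (rule ccontr)
  define G where "G = {j\<in>S. card {i\<in>S. v i < v j} < r}"
  define B where "B = S - G"
  assume "\<not> r \<le> card {j\<in>S. card {i\<in>S. v i < v j} < r}"
  then have Gr: "card G < r" unfolding G_def by simp
  have "B \<noteq> {}"
  proof
    assume "B = {}" then have "S \<subseteq> G" unfolding B_def by auto
    then have "card S \<le> card G" using assms by (simp add: G_def card_mono)
    then show False using Gr assms by linarith
  qed
  have fB: "finite B" using assms by (simp add: B_def)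
  have "Min (v ` B) \<in> v ` B" using fB \<open>B \<noteq> {}\<close> by (intro Min_in) auto
  then obtain j0 where j0a: "j0 \<in> B" "v j0 = Min (v ` B)" by auto
  have j0: "j0 \<in> B" "\<forall>j\<in>B. v j0 \<le> v j"
    using j0a fB by auto
  have "{i\<in>S. v i < v j0} \<subseteq> G"
  proof
    fix i assume "i \<in> {i\<in>S. v i < v j0}"
    then have "i \<in> S" "v i < v j0" by auto
    show "i \<in> G"
    proof (rule ccontr)
      assume "i \<notin> G"
      then have "i \<in> B" using \<open>i \<in> S\<close> unfolding B_def by simp
      then have "v j0 \<le> v i" using j0 by simp
      then show False using \<open>v i < v j0\<close> by simp
    qed
  qed
  then have "card {i\<in>S. v i < v j0} \<le> card G"
    using assms by (intro card_mono) (auto simp: G_def)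
  moreover have "r \<le> card {i\<in>S. v i < v j0}" using j0 unfolding B_def G_def by auto
  ultimately show False using Gr by linarith
qed


lemma exists_assignment:
  fixes c :: "'l \<Rightarrow> nat"
  assumes "finite L" "finite A" "card A = (\<Sum>l\<in>L. c l)"
  shows "\<exists>f. f ` A \<subseteq> L \<and> (\<forall>l\<in>L. card {i\<in>A. f i = l} = c l)"
  using assms
proof (induction L arbitrary: A rule: finite_induct)
  case empty
  then have "A = {}" by simp
  then show ?case by simp
next
  case (insert l L)
  have cA: "card A = c l + (\<Sum>l\<in>L. c l)" using insert.prems(2) insert.hyps(1,2) by simp
  then have "c l \<le> card A" by simp
  then obtain B where B: "B \<subseteq> A" "card B = c l"
    using obtain_subset_with_card_n by blast
  have fB: "finite B" using B insert.prems(1) finite_subset by blast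
  have "card (A - B) = card A - card B" using B fB by (simp add: card_Diff_subset)
  then have "card (A - B) = (\<Sum>l\<in>L. c l)" using cA B by simp
  moreover have "finite (A - B)" using insert.prems(1) by simp
  ultimately have "\<exists>f. f ` (A - B) \<subseteq> L \<and> (\<forall>l\<in>L. card {i\<in>A - B. f i = l} = c l)"
    using insert.IH[of "A - B"] by simp
  then obtain f where f: "f ` (A - B) \<subseteq> L" "\<forall>l\<in>L. card {i\<in>A - B. f i = l} = c l"
    by blast
  define g where "g = (\<lambda>i. if i \<in> B then l else f i)"
  have "g ` A \<subseteq> insert l L" using f by (auto simp: g_def)
  moreover have "\<forall>l'\<in>insert l L. card {i\<in>A. g i = l'} = c l'"
  proof
    fix l' assume l': "l' \<in> insert l L"
    show "card {i\<in>A. g i = l'} = c l'"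
    proof (cases "l' = l")
      case True
      have "{i\<in>A. g i = l'} = B" using f B insert(2) True by (auto simp: g_def)
      then show ?thesis using B True by simp
    next
      case False
      then have "l' \<in> L" using l' by auto
      have "{i\<in>A. g i = l'} = {i\<in>A - B. f i = l'}" using False by (auto simp: g_def)
      then show ?thesis using f \<open>l' \<in> L\<close> by simp
    qed
  qed
  ultimately show ?case by blast
qed



lemma conf_score_01:
  assumes "prediction_function K C" "k \<in> {1..K}"
  shows "0 \<le> conf_score C D x k \<and> conf_score C D x k \<le> 1"
proof -
  define S where "S = {t \<in> {0..1::real}. k \<in> C D x (\<lambda>_. t)}"
  have "(\<lambda>_. 1::real) \<in> tau_box K" by (simp add: tau_box_def)
  moreover have "\<forall>D x \<tau> k. \<tau> \<in> tau_box K \<longrightarrow> k \<in> {1..K} \<longrightarrow> \<tau> k = 1 \<longrightarrow> k \<in> C D x \<tau>"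
    using assms(1) unfolding prediction_function_def by (elim conjE) assumption
  ultimately have "k \<in> C D x (\<lambda>_. 1)" using assms(2) by blast
  then have "1 \<in> S" unfolding S_def by simp
  have bdd: "bdd_below S" unfolding S_def by (rule bdd_belowI[of _ 0]) auto
  have "Inf S \<le> 1" using \<open>1 \<in> S\<close> bdd by (rule cInf_lower)
  moreover have "0 \<le> Inf S" using \<open>1 \<in> S\<close> by (intro cInf_greatest) (auto simp: S_def)
  ultimately show ?thesis by (simp add: conf_score_def S_def)
qed

lemma pred_nat_cases:
  fixes f g :: "'a \<Rightarrow> nat" and R :: "nat \<Rightarrow> nat \<Rightarrow> 'a \<Rightarrow> bool"
  assumes "f \<in> measurable M (count_space UNIV)" "g \<in> measurable M (count_space UNIV)"
    "\<And>a b. Measurable.pred M (R a b)"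
  shows "Measurable.pred M (\<lambda>x. R (f x) (g x) x)"
proof -
  have "(\<lambda>x. R (f x) (g x) x) = (\<lambda>x. \<exists>a b. f x = a \<and> g x = b \<and> R a b x)" by auto
  moreover have "Measurable.pred M (\<lambda>x. \<exists>a b. f x = a \<and> g x = b \<and> R a b x)"
  proof (rule pred_intros_countable(2)[where P="\<lambda>x a. \<exists>b. f x = a \<and> g x = b \<and> R a b x"])
    fix a show "Measurable.pred M (\<lambda>x. \<exists>b. f x = a \<and> g x = b \<and> R a b x)"
  proof (rule pred_intros_countable(2)[where P="\<lambda>x b. f x = a \<and> g x = b \<and> R a b x"])
    fix b
    have 1: "Measurable.pred M (\<lambda>x. f x = a)" using assms(1) by (rule pred_count_space_const1)
    have 2: "Measurable.pred M (\<lambda>x. g x = b)" using assms(2) by (rule pred_count_space_const1)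
    have 3: "Measurable.pred M (\<lambda>x. R a b x)" using assms(3)[of a b] by simp
    show "Measurable.pred M (\<lambda>x. f x = a \<and> g x = b \<and> R a b x)"
      by (intro pred_intros_logic(3) 1 2 3)
  qed
  qed
  ultimately show ?thesis by simp
qed

lemma length_filter_map_filter:
  assumes "distinct xs"
  shows "length (filter P (map f (filter Q xs))) = card {i \<in> set xs. Q i \<and> P (f i)}"
proof -
  have "length (filter P (map f (filter Q xs))) = length (filter (\<lambda>i. Q i \<and> P (f i)) xs)"
    by (simp add: filter_map filter_filter o_def conj_commute)
  also have "\<dots> = card {i \<in> set xs. Q i \<and> P (f i)}"
    using assms by (subst distinct_length_filter) (auto intro!: arg_cong[where f=card])
  finally show ?thesis .
qed

locale cp =
  fixes K n :: nat and \<alpha> :: real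
    and M :: "'w measure"
    and X :: "nat \<Rightarrow> 'w \<Rightarrow> real ^ 'd"
    and Y Yt :: "nat \<Rightarrow> 'w \<Rightarrow> nat"
    and T :: "nat set"
    and nk :: "nat \<Rightarrow> nat"
    and C :: "(real ^ 'd) tdata \<Rightarrow> real ^ 'd \<Rightarrow> (nat \<Rightarrow> real) \<Rightarrow> nat set"
    and P :: "((real ^ 'd) \<times> nat \<times> nat) measure"
  assumes K2: "K \<ge> 2" and n2: "n \<ge> 2" and alpha: "0 < \<alpha>" "\<alpha> < 1"
    and PS: "prob_space M"
    and indep: "prob_space.indep_vars M (\<lambda>_. triple_space) (\<lambda>i \<omega>. (X i \<omega>, Y i \<omega>, Yt i \<omega>)) {1..Suc n}"
    and P_def: "P = distr M triple_space (\<lambda>\<omega>. (X 1 \<omega>, Y 1 \<omega>, Yt 1 \<omega>))"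
    and ident: "\<forall>i\<in>{1..Suc n}. distr M triple_space (\<lambda>\<omega>. (X i \<omega>, Y i \<omega>, Yt i \<omega>)) = P"
    and ranges: "\<forall>i\<in>{1..Suc n}. \<forall>\<omega>\<in>space M. Y i \<omega> \<in> {1..K} \<and> Yt i \<omega> \<in> {1..K}"
    and CI: "cond_indep_obs P (sets borel)"
    and posY: "\<forall>l\<in>{1..K}. measure P {z \<in> space P. fst (snd z) = l} > 0"
    and posYt: "\<forall>l\<in>{1..K}. measure P {z \<in> space P. snd (snd z) = l} > 0"
    and Tsub: "T \<subseteq> {1..n}" and Tne: "T \<noteq> {}" and Calne: "{1..n} - T \<noteq> {}"
    and nk1: "\<forall>k\<in>{1..K}. nk k \<ge> 1" and nksum: "(\<Sum>k\<in>{1..K}. nk k) = card ({1..n} - T)"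
    and PF: "prediction_function K C" and SC: "score_consistent K C"
    and smeas: "\<forall>k\<in>{1..K}. (\<lambda>p. conf_score C (fst p) (snd p) k)
            \<in> borel_measurable (PiM T (\<lambda>_. (borel :: (real ^ 'd) measure) \<Otimes>\<^sub>M count_space UNIV) \<Otimes>\<^sub>M borel)"
begin

definition "Z i \<omega> = (X i \<omega>, Y i \<omega>, Yt i \<omega>)"
definition "Cal = {1..n} - T"
definition "I = {1..Suc n}"
definition "lab d i = snd (snd (d i))"
definition "trD d = restrict (\<lambda>i. (fst (d i), lab d i)) T"
definition "sc d x k = conf_score C (trD d) x k"
definition "tauD d k = conf_quantile \<alpha> (map (\<lambda>i. sc d (fst (d i)) k) (filter (\<lambda>i. lab d i = k) (sorted_list_of_set Cal)))"
definition "NDp d = (\<forall>l\<in>{1..K}. card {i\<in>Cal. lab d i = l} = nk l)"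
definition "mD d k = card {i\<in>Cal. lab d i = k}"
definition "cD d k s = card {i\<in>Cal. lab d i = k \<and> sc d (fst (d i)) k < s}"
definition "rr m = nat \<lceil>(1 + real m) * (1-\<alpha>)\<rceil>"

lemma finite_Cal: "finite Cal" by (simp add: Cal_def)

lemma rr_ge1: "1 \<le> rr m"
proof -
  have "0 < (1 + real m) * (1-\<alpha>)" using alpha by simp
  then show ?thesis unfolding rr_def by linarith
qed

lemma rr_le: "rr m \<le> Suc m"
proof -
  have "(1 + real m) * (1-\<alpha>) \<le> 1 + real m" using alpha by (simp add: mult_left_le)
  then have "\<lceil>(1 + real m) * (1-\<alpha>)\<rceil> \<le> 1 + int m" by (simp add: ceiling_le_iff)
  then show ?thesis unfolding rr_def by linarith
qed

lemma rr_ge: "(1-\<alpha>) * (1 + real m) \<le> real (rr m)"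
proof -
  have "(1 + real m) * (1-\<alpha>) \<le> of_int \<lceil>(1 + real m) * (1-\<alpha>)\<rceil>" by (rule le_of_int_ceiling)
  moreover have "0 \<le> (1 + real m) * (1-\<alpha>)" using alpha by simp
  then have "0 \<le> \<lceil>(1 + real m) * (1-\<alpha>)\<rceil>" by simp
  ultimately show ?thesis unfolding rr_def by (simp add: mult.commute)
qed

lemma tau_char:
  "s \<le> tauD d k \<longleftrightarrow> (if rr (mD d k) \<le> mD d k then cD d k s < rr (mD d k) else s \<le> 1)"
proof -
  define vs where "vs = map (\<lambda>i. sc d (fst (d i)) k) (filter (\<lambda>i. lab d i = k) (sorted_list_of_set Cal))"
  have len: "length vs = mD d k"
    unfolding vs_def mD_def using finite_Cal
    by (simp add: distinct_length_filter Int_def conj_commute)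
  have lf: "length (filter (\<lambda>v. v < s) vs) = cD d k s"
    unfolding vs_def cD_def using finite_Cal
    by (subst length_filter_map_filter) auto
  have tq: "tauD d k = (if rr (length vs) > length vs then 1 else sort vs ! (rr (length vs) - 1))"
    unfolding tauD_def conf_quantile_def rr_def vs_def[symmetric] Let_def by simp
  show ?thesis
  proof (cases "rr (mD d k) \<le> mD d k")
    case True
    then show ?thesis using tq len lf quantile_le_iff[of "rr (mD d k)" vs s] rr_ge1 by auto
  next
    case False
    then show ?thesis using tq len by auto
  qed
qed

end


context cp begin

abbreviation "TS \<equiv> (triple_space :: ((real ^ 'd) \<times> nat \<times> nat) measure)"
abbreviation "DD J \<equiv> PiM J (\<lambda>_. TS)"
abbreviation "TR \<equiv> PiM T (\<lambda>_. (borel :: (real ^ 'd) measure) \<Otimes>\<^sub>M count_space UNIV)"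

lemma space_TS: "space TS = UNIV"
  by (simp add: triple_space_def space_pair_measure)

lemma meas_lab[measurable]: "i \<in> J \<Longrightarrow> (\<lambda>d. lab d i) \<in> measurable (DD J) (count_space UNIV)"
  unfolding lab_def triple_space_def by measurable

lemma meas_fstc[measurable]: "i \<in> J \<Longrightarrow> (\<lambda>d. fst (d i)) \<in> borel_measurable (DD J)"
  unfolding triple_space_def by measurable

lemma meas_trD: 
  assumes "T \<subseteq> J"
  shows "trD \<in> measurable (DD J) TR"
  unfolding trD_def
proof (rule measurable_restrict)
  fix i assume "i \<in> T"
  then have "i \<in> J" using assms by auto
  then show "(\<lambda>d. (fst (d i), lab d i)) \<in> measurable (DD J) (borel \<Otimes>\<^sub>M count_space UNIV)"
    by measurable
qed

lemma meas_sc: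
  assumes "T \<subseteq> J" "k \<in> {1..K}" "F \<in> measurable N (DD J)" "G \<in> borel_measurable N"
  shows "(\<lambda>\<omega>. sc (F \<omega>) (G \<omega>) k) \<in> borel_measurable N"
proof -
  have 1: "(\<lambda>\<omega>. (trD (F \<omega>), G \<omega>)) \<in> measurable N (TR \<Otimes>\<^sub>M borel)"
    using meas_trD[OF assms(1)] assms(3,4) by measurable
  have 2: "(\<lambda>p. conf_score C (fst p) (snd p) k) \<in> borel_measurable (TR \<Otimes>\<^sub>M borel)"
    using smeas assms(2) by blast
  show ?thesis using measurable_comp[OF 1 2] by (simp add: sc_def o_def)
qed

lemma meas_mD:
  assumes "Cal \<subseteq> J" "F \<in> measurable N (DD J)"
  shows "(\<lambda>\<omega>. mD (F \<omega>) k) \<in> measurable N (count_space UNIV)"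
  unfolding mD_def
proof (rule measurable_card)
  fix i show "{x \<in> space N. i \<in> {i \<in> Cal. lab (F x) i = k}} \<in> sets N"
  proof (cases "i \<in> Cal")
    case True
    then have "i \<in> J" using assms by auto
    have "Measurable.pred N (\<lambda>x. lab (F x) i = k)"
      using assms(2) \<open>i \<in> J\<close> by measurable
    then show ?thesis using True by (simp add: pred_def)
  next
    case False
    then show ?thesis by simp
  qed
qed

lemma meas_cD:
  assumes "T \<subseteq> J" "Cal \<subseteq> J" "k \<in> {1..K}" "F \<in> measurable N (DD J)" "G \<in> borel_measurable N"
  shows "(\<lambda>\<omega>. cD (F \<omega>) k (G \<omega>)) \<in> measurable N (count_space UNIV)"
  unfolding cD_def
proof (rule measurable_card)
  fix i show "{x \<in> space N. i \<in> {i \<in> Cal. lab (F x) i = k \<and> sc (F x) (fst (F x i)) k < G x}} \<in> sets N"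
  proof (cases "i \<in> Cal")
    case True
    then have "i \<in> J" using assms by auto
    have f: "(\<lambda>x. fst (F x i)) \<in> borel_measurable N"
      using assms(4) \<open>i \<in> J\<close> by measurable
    have s: "(\<lambda>x. sc (F x) (fst (F x i)) k) \<in> borel_measurable N"
      by (rule meas_sc[OF assms(1,3,4) f])
    have "Measurable.pred N (\<lambda>x. lab (F x) i = k \<and> sc (F x) (fst (F x i)) k < G x)"
      using assms(4,5) \<open>i \<in> J\<close> s by measurable
    then show ?thesis using True by (simp add: pred_def)
  next
    case False
    then show ?thesis by simp
  qed
qed

lemma pred_le_tau:
  assumes "T \<subseteq> J" "Cal \<subseteq> J" "k \<in> {1..K}" "F \<in> measurable N (DD J)" "G \<in> borel_measurable N"
  shows "Measurable.pred N (\<lambda>\<omega>. sc (F \<omega>) (G \<omega>) k \<le> tauD (F \<omega>) k)"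
proof -
  have s: "(\<lambda>\<omega>. sc (F \<omega>) (G \<omega>) k) \<in> borel_measurable N"
    by (rule meas_sc[OF assms(1,3,4,5)])
  define R where "R = (\<lambda>a b \<omega>. if rr a \<le> a then b < rr a else sc (F \<omega>) (G \<omega>) k \<le> 1)"
  have m: "(\<lambda>\<omega>. mD (F \<omega>) k) \<in> measurable N (count_space UNIV)"
    by (rule meas_mD[OF assms(2,4)])
  have c: "(\<lambda>\<omega>. cD (F \<omega>) k (sc (F \<omega>) (G \<omega>) k)) \<in> measurable N (count_space UNIV)"
    by (rule meas_cD[OF assms(1,2,3,4) s])
  have r: "Measurable.pred N (R a b)" for a b
  proof (cases "rr a \<le> a")
    case True then show ?thesis by (simp add: R_def)
  next
    case False then show ?thesis using s by (simp add: R_def)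
  qed
  have "Measurable.pred N (\<lambda>\<omega>. R (mD (F \<omega>) k) (cD (F \<omega>) k (sc (F \<omega>) (G \<omega>) k)) \<omega>)"
    by (rule pred_nat_cases[OF m c r])
  then show ?thesis by (simp add: tau_char R_def)
qed

lemma pred_NDp:
  assumes "Cal \<subseteq> J" "F \<in> measurable N (DD J)"
  shows "Measurable.pred N (\<lambda>\<omega>. NDp (F \<omega>))"
proof -
  have "Measurable.pred N (\<lambda>\<omega>. \<forall>l\<in>{1..K}. mD (F \<omega>) l = nk l)"
  proof (rule pred_intros_finite(3))
    fix l
    show "Measurable.pred N (\<lambda>\<omega>. mD (F \<omega>) l = nk l)"
      by (rule pred_count_space_const1[OF meas_mD[OF assms]])
  qed simp
  then show ?thesis by (simp add: NDp_def mD_def)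
qed

end


context cp begin

lemma PSM: "prob_space M" by (rule PS)

lemma rvZ: "i \<in> I \<Longrightarrow> Z i \<in> measurable M TS"
proof -
  assume i: "i \<in> I"
  have "\<forall>i\<in>{1..Suc n}. (\<lambda>\<omega>. (X i \<omega>, Y i \<omega>, Yt i \<omega>)) \<in> measurable M TS"
    using indep unfolding prob_space.indep_vars_def[OF PS] by (elim conjE) assumption
  then show ?thesis using i unfolding I_def Z_def[abs_def] by (rule bspec)
qed

lemma Z1: "1 \<in> I" by (simp add: I_def)

lemma P_eq: "P = distr M TS (Z 1)"
  by (simp add: P_def Z_def[abs_def])

lemma prob_P: "prob_space P"
  unfolding P_eq by (rule prob_space.prob_space_distr[OF PS rvZ[OF Z1]])

lemma mY[measurable]: "(\<lambda>z. fst (snd z)) \<in> measurable TS (count_space UNIV)"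
  unfolding triple_space_def by (rule measurable_compose[OF measurable_snd measurable_fst])
lemma mYt[measurable]: "(\<lambda>z. snd (snd z)) \<in> measurable TS (count_space UNIV)"
  unfolding triple_space_def by (rule measurable_compose[OF measurable_snd measurable_snd])
lemma mX[measurable]: "fst \<in> measurable TS borel"
  unfolding triple_space_def by (rule measurable_fst)

lemma TS_sets:
  assumes "A \<in> sets borel"
  shows "{z. fst z \<in> A \<and> fst (snd z) \<in> L \<and> snd (snd z) \<in> L'} \<in> sets TS"
proof -
  have "{z. fst z \<in> A \<and> fst (snd z) \<in> L \<and> snd (snd z) \<in> L'} = A \<times> (L \<times> L')" by auto
  moreover have "L \<times> L' \<in> sets (count_space UNIV \<Otimes>\<^sub>M count_space UNIV)"
    by (rule pair_measureI) auto
  ultimately show ?thesis unfolding triple_space_def using assms by (simp add: pair_measureI)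
qed

lemma space_P: "space P = UNIV" by (simp add: P_eq space_TS)
lemma sets_P: "sets P = sets TS" by (simp add: P_eq)

lemma P_ae:
  assumes "B \<in> sets P"
  shows "measure P B = measure P (B \<inter> {z. fst (snd z) \<in> {1..K}})"
proof -
  have "{z. fst z \<in> UNIV \<and> fst (snd z) \<in> {1..K} \<and> snd (snd z) \<in> UNIV} \<in> sets TS"
    by (rule TS_sets) simp
  then have "{z. fst (snd z) \<in> {1..K}} \<in> sets P" by (simp add: sets_P)
  then have B': "B \<inter> {z. fst (snd z) \<in> {1..K}} \<in> sets P"
    using assms by (rule sets.Int[rotated])
  have "Z 1 -` B \<inter> space M = Z 1 -` (B \<inter> {z. fst (snd z) \<in> {1..K}}) \<inter> space M"
    using ranges by (auto simp: Z_def)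
  then show ?thesis
    using assms B' rvZ[OF Z1] unfolding P_eq by (simp add: measure_distr)
qed

lemma decomp:
  assumes A: "A \<in> sets borel" and k: "k \<in> {1..K}"
  shows "measure P {z \<in> space P. fst z \<in> A \<and> snd (snd z) = k}
       = (\<Sum>l\<in>{1..K}. measure P {z \<in> space P. fst z \<in> A \<and> fst (snd z) = l \<and> snd (snd z) = k})"
proof -
  interpret PP: prob_space P by (rule prob_P)
  define E where "E l = {z \<in> space P. fst z \<in> A \<and> fst (snd z) = l \<and> snd (snd z) = k}" for l
  note [measurable] = A
  have "{z. fst z \<in> A \<and> fst (snd z) \<in> {l} \<and> snd (snd z) \<in> {k}} \<in> sets TS" for l
    using A by (rule TS_sets)
  then have Es: "E l \<in> sets P" for l
    unfolding E_def sets_P space_P by simp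
  have "{z. fst z \<in> A \<and> fst (snd z) \<in> UNIV \<and> snd (snd z) \<in> {k}} \<in> sets TS"
    using A by (rule TS_sets)
  then have B: "{z \<in> space P. fst z \<in> A \<and> snd (snd z) = k} \<in> sets P"
    unfolding sets_P space_P by simp
  have disj: "disjoint_family_on E {1..K}"
    unfolding disjoint_family_on_def E_def by blast
  have "{z \<in> space P. fst z \<in> A \<and> snd (snd z) = k} \<inter> {z. fst (snd z) \<in> {1..K}} = (\<Union>l\<in>{1..K}. E l)"
    unfolding E_def by auto
  then have "measure P {z \<in> space P. fst z \<in> A \<and> snd (snd z) = k} = measure P (\<Union>l\<in>{1..K}. E l)"
    using P_ae[OF B] by simp
  also have "\<dots> = (\<Sum>l\<in>{1..K}. measure P (E l))"
    by (rule PP.finite_measure_finite_Union) (use Es disj in auto)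
  finally show ?thesis unfolding E_def .
qed

lemma part1:
  assumes g: "g \<in> borel_measurable borel" and k: "k \<in> {1..K}"
    and hyp: "\<forall>l\<in>{1..K}. l \<noteq> k \<longrightarrow> cdf_true P g l t \<le> cdf_true P g k t"
  shows "cdf_obs P g k t \<le> cdf_true P g k t"
proof -
  interpret PP: prob_space P by (rule prob_P)
  define A where "A = {x. g x \<le> t}"
  have A: "A \<in> sets borel"
  proof -
    have "{x \<in> space borel. g x \<le> t} \<in> sets borel" using g by measurable
    then show ?thesis by (simp add: A_def)
  qed
  define py where "py l = measure P {z \<in> space P. fst (snd z) = l}" for l
  define pj where "pj l = measure P {z \<in> space P. fst (snd z) = l \<and> snd (snd z) = k}" for l
  define po where "po = measure P {z \<in> space P. snd (snd z) = k}"
  define F where "F l = cdf_true P g l t" for l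
  have py: "l \<in> {1..K} \<Longrightarrow> py l > 0" for l using posY by (simp add: py_def)
  have po: "po > 0" using posYt k by (simp add: po_def)
  have trm: "measure P {z \<in> space P. fst z \<in> A \<and> fst (snd z) = l \<and> snd (snd z) = k} = F l * pj l"
    if l: "l \<in> {1..K}" for l
  proof -
    define a where "a = measure P {z \<in> space P. fst z \<in> A \<and> fst (snd z) = l \<and> snd (snd z) = k}"
    define b where "b = measure P {z \<in> space P. fst z \<in> A \<and> fst (snd z) = l}"
    have e1: "a * py l = b * pj l"
      using bspec[OF CI[unfolded cond_indep_obs_def] A, rule_format, of l k] unfolding py_def pj_def a_def b_def .
    have e2: "F l = b / py l"
      unfolding F_def cdf_true_def py_def A_def b_def by simp
    have "b = F l * py l" using e2 py[OF l] by simp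
    then have "a * py l = (F l * pj l) * py l" using e1 by (simp add: algebra_simps)
    then have "a = F l * pj l" using py[OF l] by simp
    then show ?thesis unfolding a_def .
  qed
  have num: "measure P {z \<in> space P. g (fst z) \<le> t \<and> snd (snd z) = k} = (\<Sum>l\<in>{1..K}. F l * pj l)"
  proof -
    have "measure P {z \<in> space P. g (fst z) \<le> t \<and> snd (snd z) = k}
        = measure P {z \<in> space P. fst z \<in> A \<and> snd (snd z) = k}" by (simp add: A_def)
    also have "\<dots> = (\<Sum>l\<in>{1..K}. F l * pj l)"
      using decomp[OF A k] trm by simp
    finally show ?thesis .
  qed
  have den: "po = (\<Sum>l\<in>{1..K}. pj l)"
  proof -
    have "po = measure P {z \<in> space P. fst z \<in> UNIV \<and> snd (snd z) = k}" by (simp add: po_def)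
    also have "\<dots> = (\<Sum>l\<in>{1..K}. pj l)" using decomp[of UNIV k] k by (simp add: pj_def)
    finally show ?thesis .
  qed
  have "(\<Sum>l\<in>{1..K}. F l * pj l) \<le> (\<Sum>l\<in>{1..K}. F k * pj l)"
  proof (rule sum_mono)
    fix l assume l: "l \<in> {1..K}"
    have "F l \<le> F k" using hyp l by (cases "l = k") (auto simp: F_def)
    moreover have "0 \<le> pj l" by (simp add: pj_def)
    ultimately show "F l * pj l \<le> F k * pj l" by (rule mult_right_mono)
  qed
  also have "\<dots> = F k * po" by (simp add: den sum_distrib_left)
  finally have "measure P {z \<in> space P. g (fst z) \<le> t \<and> snd (snd z) = k} \<le> F k * po"
    using num by simp
  then have "measure P {z \<in> space P. g (fst z) \<le> t \<and> snd (snd z) = k} / po \<le> F k"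
    using po by (simp add: divide_le_eq)
  then show ?thesis unfolding cdf_obs_def F_def po_def by simp
qed

end


lemma sum_indicator_card:
  assumes "finite A"
  shows "(\<Sum>j\<in>A. indicator B (f j) :: real) = real (card {j\<in>A. f j \<in> B})"
proof -
  have "(\<Sum>j\<in>A. indicator B (f j) :: real) = (\<Sum>j\<in>A. if f j \<in> B then 1 else 0)"
    by (intro sum.cong) (auto simp: indicator_def)
  also have "\<dots> = (\<Sum>j\<in>{j\<in>A. f j \<in> B}. 1)"
    by (rule sum.inter_filter[OF assms, symmetric])
  finally show ?thesis by simp
qed

context cp begin

definition "sw j i = (if i = j then Suc n else if i = Suc n then j else i)"
definition "zs j z = (\<lambda>i\<in>I. z (sw j i))"
definition "Jx = Cal \<union> {Suc n}"
definition "Gs k = {z \<in> space (DD I). lab z (Suc n) = k \<and> NDp z \<and> sc z (fst (z (Suc n))) k \<le> tauD z k}"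
definition "Hs k = {z \<in> space (DD I). lab z (Suc n) = k \<and> NDp z}"

lemma Cal_sub: "Cal \<subseteq> {1..n}" by (auto simp: Cal_def)
lemma Suc_notin_Cal: "Suc n \<notin> Cal" by (auto simp: Cal_def)
lemma Jx_sub: "Jx \<subseteq> I" by (auto simp: Jx_def I_def Cal_def)
lemma finite_Jx: "finite Jx" by (simp add: Jx_def finite_Cal)
lemma T_Jx: "T \<inter> Jx = {}" using Tsub by (auto simp: Jx_def Cal_def)
lemma Cal_I: "Cal \<subseteq> I" using Jx_sub by (auto simp: Jx_def)
lemma T_I: "T \<subseteq> I" using Tsub by (auto simp: I_def)

lemma sw_sw: "sw j (sw j i) = i" by (auto simp: sw_def)
lemma sw_I: "j \<in> I \<Longrightarrow> i \<in> I \<Longrightarrow> sw j i \<in> I" by (auto simp: sw_def I_def)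
lemma sw_T: "j \<in> Jx \<Longrightarrow> i \<in> T \<Longrightarrow> sw j i = i"
  using T_Jx Tsub by (auto simp: sw_def)

lemma bij_sw: "j \<in> I \<Longrightarrow> bij_betw (sw j) I I"
  by (rule bij_betwI[where g="sw j"]) (auto simp: sw_I sw_sw)

lemma Cal_ne: "i \<in> Cal \<Longrightarrow> i \<noteq> Suc n" using Suc_notin_Cal by auto

lemma sw_Cal: assumes "j \<in> Jx" shows "bij_betw (sw j) Cal (Jx - {j})"
proof (rule bij_betwI[where g="sw j"])
  show "sw j \<in> Cal \<rightarrow> Jx - {j}"
  proof
    fix i assume i: "i \<in> Cal"
    then have "i \<noteq> Suc n" by (rule Cal_ne)
    show "sw j i \<in> Jx - {j}"
    proof (cases "i = j")
      case True then show ?thesis using \<open>i \<noteq> Suc n\<close> by (simp add: sw_def Jx_def)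
    next
      case False then show ?thesis using \<open>i \<noteq> Suc n\<close> i by (simp add: sw_def Jx_def)
    qed
  qed
  show "sw j \<in> Jx - {j} \<rightarrow> Cal"
  proof
    fix i assume i: "i \<in> Jx - {j}"
    show "sw j i \<in> Cal"
    proof (cases "i = Suc n")
      case True then show ?thesis using i assms by (auto simp: sw_def Jx_def)
    next
      case False then show ?thesis using i by (simp add: sw_def Jx_def)
    qed
  qed
qed (auto simp: sw_sw)

lemma card_sw:
  assumes "j \<in> Jx"
  shows "card {i\<in>Cal. Q (sw j i)} = card {i\<in>Jx - {j}. Q i}"
proof -
  have b: "bij_betw (sw j) Cal (Jx - {j})" by (rule sw_Cal[OF assms])
  have "sw j ` {i\<in>Cal. Q (sw j i)} = {i\<in>Jx - {j}. Q i}"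
  proof
    show "sw j ` {i\<in>Cal. Q (sw j i)} \<subseteq> {i\<in>Jx - {j}. Q i}"
      using b by (auto simp: bij_betw_def)
    show "{i\<in>Jx - {j}. Q i} \<subseteq> sw j ` {i\<in>Cal. Q (sw j i)}"
    proof
      fix i assume i: "i \<in> {i\<in>Jx - {j}. Q i}"
      then have "sw j i \<in> Cal" using assms Suc_notin_Cal by (auto simp: sw_def Jx_def)
      then show "i \<in> sw j ` {i\<in>Cal. Q (sw j i)}" using i by (auto simp: sw_sw intro!: image_eqI[where x="sw j i"])
    qed
  qed
  moreover have "inj_on (sw j) {i\<in>Cal. Q (sw j i)}"
    using b by (auto simp: bij_betw_def intro: inj_on_subset)
  ultimately show ?thesis using card_image by fastforce
qed

lemma zs_space: "zs j z \<in> space (DD I)" by (simp add: zs_def space_PiM space_TS)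
lemma lab_zs: "i \<in> I \<Longrightarrow> lab (zs j z) i = lab z (sw j i)" by (simp add: lab_def zs_def)
lemma fst_zs: "i \<in> I \<Longrightarrow> fst (zs j z i) = fst (z (sw j i))" by (simp add: zs_def)
lemma Sucn_I: "Suc n \<in> I" by (simp add: I_def)
lemma sw_Sucn: "sw j (Suc n) = j" by (simp add: sw_def)

lemma trD_zs: "j \<in> Jx \<Longrightarrow> trD (zs j z) = trD z"
  unfolding trD_def
proof (intro restrict_ext)
  fix i assume "j \<in> Jx" "i \<in> T"
  then have "i \<in> I" "sw j i = i" using T_I sw_T by auto
  then show "(fst (zs j z i), lab (zs j z) i) = (fst (z i), lab z i)"
    by (simp add: lab_zs fst_zs)
qed

lemma sc_zs: "j \<in> Jx \<Longrightarrow> sc (zs j z) x k = sc z x k" by (simp add: sc_def trD_zs)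

lemma card_zs:
  assumes "j \<in> Jx"
  shows "card {i\<in>Cal. Q (lab (zs j z) i) (fst (zs j z i))} = card {i\<in>Jx - {j}. Q (lab z i) (fst (z i))}"
proof -
  have "{i\<in>Cal. Q (lab (zs j z) i) (fst (zs j z i))} = {i\<in>Cal. Q (lab z (sw j i)) (fst (z (sw j i)))}"
    using Cal_I by (auto simp: lab_zs fst_zs)
  also have "card \<dots> = card {i\<in>Jx - {j}. Q (lab z i) (fst (z i))}"
    by (rule card_sw[OF assms, where Q="\<lambda>i. Q (lab z i) (fst (z i))"])
  finally show ?thesis by simp
qed

lemma mD_zs: "j \<in> Jx \<Longrightarrow> mD (zs j z) l = card {i\<in>Jx - {j}. lab z i = l}"
  unfolding mD_def using card_zs[where Q="\<lambda>a b. a = l"] by simp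

lemma cD_zs: "j \<in> Jx \<Longrightarrow> cD (zs j z) k s = card {i\<in>Jx - {j}. lab z i = k \<and> sc z (fst (z i)) k < s}"
  unfolding cD_def using card_zs[where Q="\<lambda>a b. a = k \<and> sc z b k < s"] by (simp add: sc_zs)

lemma memH: "j \<in> Jx \<Longrightarrow> zs j z \<in> Hs k \<longleftrightarrow> lab z j = k \<and> (\<forall>l\<in>{1..K}. card {i\<in>Jx - {j}. lab z i = l} = nk l)"
  using zs_space by (simp add: Hs_def lab_zs Sucn_I sw_Sucn NDp_def mD_zs[unfolded mD_def])

lemma memG: "j \<in> Jx \<Longrightarrow> zs j z \<in> Gs k \<longleftrightarrow> zs j z \<in> Hs k \<and>
   (if rr (card {i\<in>Jx - {j}. lab z i = k}) \<le> card {i\<in>Jx - {j}. lab z i = k}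
    then card {i\<in>Jx - {j}. lab z i = k \<and> sc z (fst (z i)) k < sc z (fst (z j)) k} < rr (card {i\<in>Jx - {j}. lab z i = k})
    else sc z (fst (z j)) k \<le> 1)"
  unfolding Gs_def Hs_def
  by (simp add: tau_char mD_zs cD_zs sc_zs fst_zs Sucn_I sw_Sucn)

lemma pointwise:
  assumes k: "k \<in> {1..K}"
  shows "real (rr (nk k)) * (\<Sum>j\<in>Jx. indicator (Hs k) (zs j z))
     \<le> real (Suc (nk k)) * (\<Sum>j\<in>Jx. indicator (Gs k) (zs j z))"
proof (cases "\<exists>j0\<in>Jx. zs j0 z \<in> Hs k")
  case False
  then have "(\<Sum>j\<in>Jx. indicator (Hs k) (zs j z) :: real) = 0" by (simp add: indicator_def)
  moreover have "0 \<le> real (Suc (nk k)) * (\<Sum>j\<in>Jx. indicator (Gs k) (zs j z) :: real)"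
    by (intro mult_nonneg_nonneg sum_nonneg) auto
  ultimately show ?thesis by simp
next
  case True
  then obtain j0 where j0: "j0 \<in> Jx" "zs j0 z \<in> Hs k" by blast
  define m where "m = nk k"
  define S where "S = {j\<in>Jx. lab z j = k}"
  define v where "v i = sc z (fst (z i)) k" for i
  have finS: "finite S" using finite_Jx by (simp add: S_def)
  have j0S: "j0 \<in> S" using j0 memH by (simp add: S_def)
  have c0: "\<forall>l\<in>{1..K}. card {i\<in>Jx - {j0}. lab z i = l} = nk l" using j0 memH by simp
  have cardl: "card {i\<in>Jx - {j}. lab z i = l} = (if l = k then card S - 1 else card {i\<in>Jx. lab z i = l})"
    if j: "j \<in> S" for j l
  proof (cases "l = k")
    case True
    then have "{i\<in>Jx - {j}. lab z i = l} = S - {j}" by (auto simp: S_def)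
    then show ?thesis using True j finS by simp
  next
    case False
    then have "{i\<in>Jx - {j}. lab z i = l} = {i\<in>Jx. lab z i = l}" using j by (auto simp: S_def)
    then show ?thesis using False by simp
  qed
  have cS: "card S = Suc m"
  proof -
    have "card S - 1 = m" using c0 k cardl[OF j0S, of k] by (simp add: m_def)
    moreover have "card S \<ge> 1" using j0S finS by (metis One_nat_def Suc_leI card_gt_0_iff empty_iff)
    ultimately show ?thesis by linarith
  qed
  have H_iff: "zs j z \<in> Hs k \<longleftrightarrow> j \<in> S" if j: "j \<in> Jx" for j
  proof
    assume "zs j z \<in> Hs k" then show "j \<in> S" using j memH by (simp add: S_def)
  next
    assume jS: "j \<in> S"
    have "\<forall>l\<in>{1..K}. card {i\<in>Jx - {j}. lab z i = l} = nk l"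
      using c0 cardl[OF jS] cardl[OF j0S] by simp
    then show "zs j z \<in> Hs k" using j jS memH by (simp add: S_def)
  qed
  have G_iff: "zs j z \<in> Gs k \<longleftrightarrow> (if rr m \<le> m then card {i\<in>S. v i < v j} < rr m else v j \<le> 1)"
    if jS: "j \<in> S" for j
  proof -
    have j: "j \<in> Jx" using jS by (simp add: S_def)
    have a: "card {i\<in>Jx - {j}. lab z i = k} = m" using cardl[OF jS, of k] cS by simp
    have "{i\<in>Jx - {j}. lab z i = k \<and> sc z (fst (z i)) k < sc z (fst (z j)) k} = {i\<in>S. v i < v j}"
      by (auto simp: S_def v_def)
    then show ?thesis using memG[OF j] H_iff[OF j] jS a by (simp add: v_def)
  qed
  have sumH: "(\<Sum>j\<in>Jx. indicator (Hs k) (zs j z) :: real) = real (Suc m)"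
  proof -
    have "{j\<in>Jx. zs j z \<in> Hs k} = S" using H_iff by (auto simp: S_def)
    then show ?thesis using sum_indicator_card[OF finite_Jx, of "Hs k" "\<lambda>j. zs j z"] cS by simp
  qed
  have "rr m \<le> card {j\<in>S. (if rr m \<le> m then card {i\<in>S. v i < v j} < rr m else v j \<le> 1)}"
  proof (cases "rr m \<le> m")
    case True
    then have "rr m \<le> card S" using cS by simp
    then show ?thesis using exch_count[OF finS, of "rr m" v] True by simp
  next
    case False
    have "v j \<le> 1" for j using conf_score_01[OF PF k] by (simp add: v_def sc_def)
    then have "{j\<in>S. (if rr m \<le> m then card {i\<in>S. v i < v j} < rr m else v j \<le> 1)} = S"
      using False by auto
    then show ?thesis using cS rr_le[of m] by simp
  qed
  also have "\<dots> \<le> card {j\<in>Jx. zs j z \<in> Gs k}"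
  proof (rule card_mono)
    show "finite {j\<in>Jx. zs j z \<in> Gs k}" using finite_Jx by simp
    show "{j\<in>S. (if rr m \<le> m then card {i\<in>S. v i < v j} < rr m else v j \<le> 1)} \<subseteq> {j\<in>Jx. zs j z \<in> Gs k}"
      using G_iff by (auto simp: S_def)
  qed
  finally have "real (rr m) \<le> (\<Sum>j\<in>Jx. indicator (Gs k) (zs j z))"
    using sum_indicator_card[OF finite_Jx, of "Gs k" "\<lambda>j. zs j z"] by simp
  then have "real (rr m) * real (Suc m) \<le> real (Suc m) * (\<Sum>j\<in>Jx. indicator (Gs k) (zs j z))"
    by (simp add: mult.commute)
  then show ?thesis using sumH by (simp add: m_def)
qed

end


context cp begin

abbreviation "QQ \<equiv> PiM I (\<lambda>_. P)"

lemma QQ_prob: "prob_space QQ"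
  by (rule prob_space_PiM) (rule prob_P)

lemma sets_QQ: "sets QQ = sets (DD I)"
  by (rule sets_PiM_cong) (auto simp: sets_P)

lemma space_QQ: "space QQ = space (DD I)"
  using sets_QQ by (rule sets_eq_imp_space_eq)

lemma zs_meas: assumes "j \<in> Jx" shows "zs j \<in> measurable QQ QQ"
  unfolding zs_def
proof (rule measurable_restrict)
  fix i assume "i \<in> I"
  then have "sw j i \<in> I" using assms Jx_sub sw_I by auto
  then show "(\<lambda>x. x (sw j i)) \<in> measurable QQ P" by (rule measurable_component_singleton)
qed

lemma QQ_perm: assumes "j \<in> Jx" shows "distr QQ QQ (zs j) = QQ"
proof -
  have j: "j \<in> I" using assms Jx_sub by auto
  have "distr QQ (PiM I (\<lambda>i. (\<lambda>_. P) (sw j i))) (\<lambda>\<omega>. \<lambda>n\<in>I. \<omega> (sw j n)) = PiM I (\<lambda>i. (\<lambda>_. P) (sw j i))"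
    by (rule distr_PiM_reindex) (use prob_P bij_sw[OF j] in \<open>auto simp: bij_betw_def\<close>)
  then show ?thesis by (simp add: zs_def[abs_def])
qed

lemma Gs_sets: assumes k: "k \<in> {1..K}" shows "Gs k \<in> sets QQ" "Hs k \<in> sets QQ"
proof -
  have id: "(\<lambda>z. z) \<in> measurable (DD I) (DD I)" by simp
  have f: "(\<lambda>z. fst (z (Suc n))) \<in> borel_measurable (DD I)" using Sucn_I by (rule meas_fstc)
  have p1: "Measurable.pred (DD I) (\<lambda>z. lab z (Suc n) = k)"
    using meas_lab[OF Sucn_I] by (rule pred_count_space_const1)
  have p2: "Measurable.pred (DD I) (\<lambda>z. NDp z)" using pred_NDp[OF Cal_I id] .
  have p3: "Measurable.pred (DD I) (\<lambda>z. sc z (fst (z (Suc n))) k \<le> tauD z k)"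
    using pred_le_tau[OF T_I Cal_I k id f] .
  have "Measurable.pred (DD I) (\<lambda>z. lab z (Suc n) = k \<and> NDp z \<and> sc z (fst (z (Suc n))) k \<le> tauD z k)"
    by (intro pred_intros_logic(3) p1 p2 p3)
  then show "Gs k \<in> sets QQ" unfolding Gs_def sets_QQ by (simp add: pred_def)
  have "Measurable.pred (DD I) (\<lambda>z. lab z (Suc n) = k \<and> NDp z)"
    by (intro pred_intros_logic(3) p1 p2)
  then show "Hs k \<in> sets QQ" unfolding Hs_def sets_QQ by (simp add: pred_def)
qed

lemma int_perm:
  assumes j: "j \<in> Jx" and A: "A \<in> sets QQ"
  shows "integrable QQ (\<lambda>z. indicator A (zs j z) :: real)"
    and "(\<integral>z. indicator A (zs j z) \<partial>QQ) = measure QQ A"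
proof -
  interpret Q: prob_space QQ by (rule QQ_prob)
  have m: "zs j \<in> measurable QQ QQ" by (rule zs_meas[OF j])
  have ib: "(indicator A :: _ \<Rightarrow> real) \<in> borel_measurable QQ" using A by simp
  have "integrable QQ (indicator A :: _ \<Rightarrow> real)"
    using A by (intro integrable_real_indicator) (auto simp: Q.emeasure_eq_measure)
  then have "integrable (distr QQ QQ (zs j)) (indicator A :: _ \<Rightarrow> real)" by (simp add: QQ_perm[OF j])
  then show "integrable QQ (\<lambda>z. indicator A (zs j z) :: real)"
    using integrable_distr_eq[OF m ib] by simp
  have "(\<integral>z. indicator A (zs j z) \<partial>QQ) = integral\<^sup>L (distr QQ QQ (zs j)) (indicator A :: _ \<Rightarrow> real)"
    using integral_distr[OF m ib] by simp
  also have "\<dots> = measure QQ A" using A by (simp add: QQ_perm[OF j])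
  finally show "(\<integral>z. indicator A (zs j z) \<partial>QQ) = measure QQ A" .
qed

lemma exch:
  assumes k: "k \<in> {1..K}"
  shows "(1-\<alpha>) * measure QQ (Hs k) \<le> measure QQ (Gs k)"
proof -
  interpret Q: prob_space QQ by (rule QQ_prob)
  note GH = Gs_sets[OF k]
  define m where "m = nk k"
  have "(\<integral>z. real (rr m) * (\<Sum>j\<in>Jx. indicator (Hs k) (zs j z)) \<partial>QQ)
      \<le> (\<integral>z. real (Suc m) * (\<Sum>j\<in>Jx. indicator (Gs k) (zs j z)) \<partial>QQ)"
  proof (rule integral_mono)
    show "integrable QQ (\<lambda>z. real (rr m) * (\<Sum>j\<in>Jx. indicator (Hs k) (zs j z)))"
      using int_perm(1)[OF _ GH(2)] by (intro integrable_mult_right integrable_sum) auto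
    show "integrable QQ (\<lambda>z. real (Suc m) * (\<Sum>j\<in>Jx. indicator (Gs k) (zs j z)))"
      using int_perm(1)[OF _ GH(1)] by (intro integrable_mult_right integrable_sum) auto
    fix z show "real (rr m) * (\<Sum>j\<in>Jx. indicator (Hs k) (zs j z))
      \<le> real (Suc m) * (\<Sum>j\<in>Jx. indicator (Gs k) (zs j z))"
      using pointwise[OF k] by (simp add: m_def)
  qed
  also have "(\<integral>z. real (Suc m) * (\<Sum>j\<in>Jx. indicator (Gs k) (zs j z)) \<partial>QQ)
      = real (Suc m) * (\<Sum>j\<in>Jx. measure QQ (Gs k))"
    using int_perm[OF _ GH(1)] by (simp add: integral_sum)
  also have "(\<integral>z. real (rr m) * (\<Sum>j\<in>Jx. indicator (Hs k) (zs j z)) \<partial>QQ)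
      = real (rr m) * (\<Sum>j\<in>Jx. measure QQ (Hs k))"
    using int_perm[OF _ GH(2)] by (simp add: integral_sum)
  finally have "real (card Jx) * (real (rr m) * measure QQ (Hs k))
      \<le> real (card Jx) * (real (Suc m) * measure QQ (Gs k))" by (simp add: mult.left_commute del: of_nat_Suc)
  moreover have "card Jx > 0" using finite_Jx by (auto simp: Jx_def card_gt_0_iff)
  ultimately have "real (rr m) * measure QQ (Hs k) \<le> real (Suc m) * measure QQ (Gs k)"
    by (simp del: of_nat_Suc)
  moreover have "(1-\<alpha>) * (1 + real m) * measure QQ (Hs k) \<le> real (rr m) * measure QQ (Hs k)"
    using rr_ge[of m] by (intro mult_right_mono) auto
  ultimately have "(1 + real m) * ((1-\<alpha>) * measure QQ (Hs k)) \<le> (1 + real m) * measure QQ (Gs k)"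
    by (simp add: algebra_simps)
  then show ?thesis by simp
qed

end


context cp begin

definition "Zall \<omega> = (\<lambda>i\<in>I. Z i \<omega>)"
definition "W \<omega> = (\<lambda>i\<in>{1..n}. Z i \<omega>)"
abbreviation "DN \<equiv> DD {1..n}"

lemma indepZ: "prob_space.indep_vars M (\<lambda>_. TS) Z I"
  using indep by (simp add: Z_def[abs_def] I_def)

lemma Zall_meas: "Zall \<in> measurable M (DD I)"
  unfolding Zall_def by (rule measurable_restrict) (rule rvZ)

lemma W_meas: "W \<in> measurable M DN"
  unfolding W_def by (rule measurable_restrict) (rule rvZ, auto simp: I_def)

definition "V \<omega> = (\<lambda>i\<in>{Suc n}. Z i \<omega>)"
abbreviation "D1 \<equiv> DD {Suc n}"
abbreviation "P1 \<equiv> PiM {Suc n} (\<lambda>_. P)"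

lemma distr_restr:
  assumes "J \<subseteq> I" "J \<noteq> {}"
  shows "distr M (DD J) (\<lambda>x. \<lambda>i\<in>J. Z i x) = PiM J (\<lambda>_. P)"
proof -
  interpret prob_space M by (rule PS)
  have iJ: "indep_vars (\<lambda>_. TS) Z J" using indepZ assms(1) by (rule indep_vars_subset)
  have "distr M (DD J) (\<lambda>x. \<lambda>i\<in>J. Z i x) = PiM J (\<lambda>i. distr M TS (Z i))"
    using iJ assms by (subst (asm) indep_vars_iff_distr_eq_PiM') (auto simp: rvZ)
  also have "\<dots> = PiM J (\<lambda>_. P)"
    using ident assms(1) by (intro PiM_cong) (auto simp: I_def Z_def[abs_def])
  finally show ?thesis .
qed

lemma distr_Zall: "distr M (DD I) Zall = QQ"
  using distr_restr[of I] by (simp add: Zall_def[abs_def] I_def)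

lemma V_meas: "V \<in> measurable M D1"
  unfolding V_def by (rule measurable_restrict) (rule rvZ, auto simp: I_def)

lemma distr_V: "distr M D1 V = P1"
  using distr_restr[of "{Suc n}"] by (simp add: V_def[abs_def] I_def)

lemma indep_WV: "prob_space.indep_var M DN W D1 V"
proof -
  interpret prob_space M by (rule PS)
  show ?thesis unfolding W_def[abs_def] V_def[abs_def]
    by (rule indep_var_restrict[OF indepZ]) (auto simp: I_def)
qed

lemma joint: "distr M (DN \<Otimes>\<^sub>M D1) (\<lambda>\<omega>. (W \<omega>, V \<omega>)) = distr M DN W \<Otimes>\<^sub>M P1"
proof -
  interpret prob_space M by (rule PS)
  show ?thesis using indep_WV[unfolded indep_var_distribution_eq] distr_V by simp
qed

lemma fubini:
  assumes A: "A \<in> sets (DN \<Otimes>\<^sub>M D1)"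
  shows "emeasure M {\<omega>\<in>space M. (W \<omega>, V \<omega>) \<in> A} = (\<integral>\<^sup>+\<omega>. emeasure P1 (Pair (W \<omega>) -` A) \<partial>M)"
proof -
  interpret PP: prob_space P1 by (rule prob_space_PiM) (rule prob_P)
  have WZ: "(\<lambda>\<omega>. (W \<omega>, V \<omega>)) \<in> measurable M (DN \<Otimes>\<^sub>M D1)"
    using W_meas V_meas by measurable
  have sA: "sets (distr M DN W \<Otimes>\<^sub>M P1) = sets (DN \<Otimes>\<^sub>M D1)"
    by (intro sets_pair_measure_cong sets_PiM_cong) (auto simp: sets_P)
  have A': "A \<in> sets (distr M DN W \<Otimes>\<^sub>M P1)" using A sA by simp
  have "emeasure M {\<omega>\<in>space M. (W \<omega>, V \<omega>) \<in> A} = emeasure (distr M (DN \<Otimes>\<^sub>M D1) (\<lambda>\<omega>. (W \<omega>, V \<omega>))) A"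
    using A WZ by (subst emeasure_distr) (auto simp: vimage_def Int_def conj_commute)
  also have "\<dots> = emeasure (distr M DN W \<Otimes>\<^sub>M P1) A" by (simp only: joint)
  also have "\<dots> = (\<integral>\<^sup>+d. emeasure P1 (Pair d -` A) \<partial>distr M DN W)"
    by (rule PP.emeasure_pair_measure_alt[OF A'])
  also have "\<dots> = (\<integral>\<^sup>+\<omega>. emeasure P1 (Pair (W \<omega>) -` A) \<partial>M)"
    by (rule nn_integral_distr[OF W_meas PP.measurable_emeasure_Pair[OF A']])
  finally show ?thesis .
qed

lemma P1_comp:
  assumes B: "B \<in> sets P"
  shows "emeasure P1 {f \<in> space P1. f (Suc n) \<in> B} = emeasure P B"
proof -
  have d: "distr P1 P (\<lambda>f. f (Suc n)) = P"
    by (rule distr_PiM_component) (auto simp: prob_P)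
  have "emeasure P B = emeasure (distr P1 P (\<lambda>f. f (Suc n))) B" by (simp add: d)
  also have "\<dots> = emeasure P1 ((\<lambda>f. f (Suc n)) -` B \<inter> space P1)"
    using B by (intro emeasure_distr) (auto intro: measurable_component_singleton)
  finally show ?thesis by (simp add: vimage_def Int_def conj_commute)
qed

end


context cp begin

lemma g_meas:
  assumes "tr \<in> space TR" "k \<in> {1..K}"
  shows "(\<lambda>x. conf_score C tr x k) \<in> borel_measurable borel"
proof -
  have 1: "(\<lambda>x. (tr, x)) \<in> measurable borel (TR \<Otimes>\<^sub>M borel)"
    using assms(1) by (intro measurable_Pair measurable_const) auto
  have 2: "(\<lambda>p. conf_score C (fst p) (snd p) k) \<in> borel_measurable (TR \<Otimes>\<^sub>M borel)"
    using smeas assms(2) by blast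
  show ?thesis using measurable_comp[OF 1 2] by (simp add: o_def)
qed

lemma train_space: "train_data X Yt T \<omega> \<in> space TR"
  by (simp add: train_data_def space_PiM space_pair_measure)

lemma trD_space: "trD d \<in> space TR"
  by (simp add: trD_def space_PiM space_pair_measure)

lemma part1_thm:
  assumes "AE \<omega> in M. \<omega> \<in> N \<longrightarrow>
           (\<forall>k\<in>{1..K}. \<forall>l\<in>{1..K}. \<forall>t::real. l \<noteq> k \<longrightarrow>
              cdf_true P (\<lambda>x. conf_score C (train_data X Yt T \<omega>) x k) l t
                \<le> cdf_true P (\<lambda>x. conf_score C (train_data X Yt T \<omega>) x k) k t)"
  shows "AE \<omega> in M. \<omega> \<in> N \<longrightarrow>
            (\<forall>k\<in>{1..K}.
               cdf_true P (\<lambda>x. conf_score C (train_data X Yt T \<omega>) x k) k (tt \<omega> k)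
                 - cdf_obs P (\<lambda>x. conf_score C (train_data X Yt T \<omega>) x k) k (tt \<omega> k) \<ge> 0)"
  using assms
proof (rule AE_mp[OF _ AE_I2], intro impI ballI)
  fix \<omega> k
  assume h: "\<omega> \<in> N \<longrightarrow> (\<forall>k\<in>{1..K}. \<forall>l\<in>{1..K}. \<forall>t::real. l \<noteq> k \<longrightarrow>
              cdf_true P (\<lambda>x. conf_score C (train_data X Yt T \<omega>) x k) l t
                \<le> cdf_true P (\<lambda>x. conf_score C (train_data X Yt T \<omega>) x k) k t)"
    and N: "\<omega> \<in> N" and k: "k \<in> {1..K}"
  have "cdf_obs P (\<lambda>x. conf_score C (train_data X Yt T \<omega>) x k) k (tt \<omega> k)
       \<le> cdf_true P (\<lambda>x. conf_score C (train_data X Yt T \<omega>) x k) k (tt \<omega> k)"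
    using h N k by (intro part1 g_meas[OF train_space k] k) auto
  then show "cdf_true P (\<lambda>x. conf_score C (train_data X Yt T \<omega>) x k) k (tt \<omega> k)
                 - cdf_obs P (\<lambda>x. conf_score C (train_data X Yt T \<omega>) x k) k (tt \<omega> k) \<ge> 0" by simp
qed

end


context cp begin

lemma agree:
  assumes a: "\<forall>i\<in>{1..n}. d i = d' i"
  shows "trD d = trD d'" "NDp d = NDp d'" "sc d = sc d'" "tauD d = tauD d'"
proof -
  show t: "trD d = trD d'"
    unfolding trD_def lab_def using a Tsub by (intro restrict_ext) auto
  have c: "\<forall>i\<in>Cal. d i = d' i" using a Cal_sub by auto
  have "{i\<in>Cal. lab d i = l} = {i\<in>Cal. lab d' i = l}" for l using c by (auto simp: lab_def)
  then show "NDp d = NDp d'" by (simp add: NDp_def)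
  show s: "sc d = sc d'" by (intro ext) (simp add: sc_def t)
  show "tauD d = tauD d'"
  proof (intro ext)
    fix k
    have "filter (\<lambda>i. lab d i = k) (sorted_list_of_set Cal) = filter (\<lambda>i. lab d' i = k) (sorted_list_of_set Cal)"
      using c finite_Cal by (intro filter_cong) (auto simp: lab_def)
    moreover have "map (\<lambda>i. sc d (fst (d i)) k) (filter (\<lambda>i. lab d' i = k) (sorted_list_of_set Cal))
        = map (\<lambda>i. sc d' (fst (d' i)) k) (filter (\<lambda>i. lab d' i = k) (sorted_list_of_set Cal))"
      using c finite_Cal s by (intro map_cong) auto
    ultimately show "tauD d k = tauD d' k" unfolding tauD_def by (simp only:)
  qed
qed

lemma W_app: "i \<in> {1..n} \<Longrightarrow> W \<omega> i = Z i \<omega>" by (simp add: W_def)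
lemma Zall_W: "\<forall>i\<in>{1..n}. Zall \<omega> i = W \<omega> i" by (simp add: W_def Zall_def I_def)
lemma V_app: "V \<omega> (Suc n) = Z (Suc n) \<omega>" by (simp add: V_def)

lemma train_W: "train_data X Yt T \<omega> = trD (W \<omega>)"
  unfolding train_data_def trD_def lab_def using Tsub
  by (intro restrict_ext) (auto simp: W_app Z_def)

lemma lc_W: "lc_threshold \<alpha> C X Yt T ({1..n} - T) \<omega> = tauD (W \<omega>)"
proof (intro ext)
  fix k
  have c: "i \<in> Cal \<Longrightarrow> W \<omega> i = Z i \<omega>" for i using Cal_sub W_app by auto
  have "filter (\<lambda>i. Yt i \<omega> = k) (sorted_list_of_set Cal) = filter (\<lambda>i. lab (W \<omega>) i = k) (sorted_list_of_set Cal)"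
    using c finite_Cal by (intro filter_cong) (auto simp: lab_def Z_def)
  moreover have "map (\<lambda>i. conf_score C (train_data X Yt T \<omega>) (X i \<omega>) k) (filter (\<lambda>i. lab (W \<omega>) i = k) (sorted_list_of_set Cal))
      = map (\<lambda>i. sc (W \<omega>) (fst (W \<omega> i)) k) (filter (\<lambda>i. lab (W \<omega>) i = k) (sorted_list_of_set Cal))"
    using c finite_Cal by (intro map_cong) (auto simp: sc_def train_W Z_def)
  ultimately show "lc_threshold \<alpha> C X Yt T ({1..n} - T) \<omega> k = tauD (W \<omega>) k"
    unfolding lc_threshold_def tauD_def Cal_def[symmetric] by (simp only:)
qed

lemma N_W: "{\<omega>\<in>space M. \<forall>k\<in>{1..K}. card {i \<in> {1..n} - T. Yt i \<omega> = k} = nk k} = {\<omega>\<in>space M. NDp (W \<omega>)}"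
proof -
  have "{i \<in> {1..n} - T. Yt i \<omega> = k} = {i\<in>Cal. lab (W \<omega>) i = k}" for \<omega> k
    using Cal_sub by (auto simp: Cal_def lab_def W_app Z_def)
  then show ?thesis by (simp add: NDp_def)
qed

lemma tau_01: assumes k: "k \<in> {1..K}" shows "0 \<le> tauD d k \<and> tauD d k \<le> 1"
proof -
  define vs where "vs = map (\<lambda>i. sc d (fst (d i)) k) (filter (\<lambda>i. lab d i = k) (sorted_list_of_set Cal))"
  have el: "v \<in> set vs \<Longrightarrow> 0 \<le> v \<and> v \<le> 1" for v
    using conf_score_01[OF PF k] by (auto simp: vs_def sc_def)
  have tq: "tauD d k = (if rr (length vs) > length vs then 1 else sort vs ! (rr (length vs) - 1))"
    unfolding tauD_def conf_quantile_def rr_def vs_def[symmetric] Let_def by simp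
  show ?thesis
  proof (cases "rr (length vs) > length vs")
    case True then show ?thesis using tq by simp
  next
    case False
    then have "rr (length vs) - 1 < length (sort vs)" using rr_ge1[of "length vs"] by simp
    then have "sort vs ! (rr (length vs) - 1) \<in> set vs" by (metis nth_mem set_sort)
    then show ?thesis using tq False el by simp
  qed
qed

end


context cp begin

definition "Bt d k = {t. fst (snd t) = k \<and> sc d (fst t) k \<le> tauD d k}"
definition "Bo d k = {t. snd (snd t) = k \<and> sc d (fst t) k \<le> tauD d k}"
definition "RS B = {p \<in> space (DN \<Otimes>\<^sub>M D1). NDp (fst p) \<and> snd p (Suc n) \<in> B (fst p)}"

lemma B_sets:
  assumes k: "k \<in> {1..K}"
  shows "Bt d k \<in> sets P" "Bo d k \<in> sets P"
proof -
  have "(\<lambda>x. conf_score C (trD d) x k) \<in> borel_measurable borel"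
    by (rule g_meas[OF trD_space k])
  then have "{x \<in> space borel. conf_score C (trD d) x k \<le> tauD d k} \<in> sets borel" by measurable
  then have A: "{x. sc d x k \<le> tauD d k} \<in> sets borel" by (simp add: sc_def)
  have "{z. fst z \<in> {x. sc d x k \<le> tauD d k} \<and> fst (snd z) \<in> {k} \<and> snd (snd z) \<in> UNIV} \<in> sets TS"
    using A by (rule TS_sets)
  then show "Bt d k \<in> sets P" by (simp add: Bt_def sets_P conj_commute)
  have "{z. fst z \<in> {x. sc d x k \<le> tauD d k} \<and> fst (snd z) \<in> UNIV \<and> snd (snd z) \<in> {k}} \<in> sets TS"
    using A by (rule TS_sets)
  then show "Bo d k \<in> sets P" by (simp add: Bo_def sets_P conj_commute)
qed

lemma sn_meas: "(\<lambda>p. snd p (Suc n)) \<in> measurable (DN \<Otimes>\<^sub>M D1) TS"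
  by (rule measurable_compose[OF measurable_snd measurable_component_singleton]) simp

lemma RS_sets:
  assumes k: "k \<in> {1..K}"
  shows "RS (\<lambda>d. Bt d k) \<in> sets (DN \<Otimes>\<^sub>M D1)" "RS (\<lambda>d. Bo d k) \<in> sets (DN \<Otimes>\<^sub>M D1)"
    "RS (\<lambda>d. {t. fst (snd t) = k}) \<in> sets (DN \<Otimes>\<^sub>M D1)" "RS (\<lambda>d. {t. snd (snd t) = k}) \<in> sets (DN \<Otimes>\<^sub>M D1)"
proof -
  have f: "fst \<in> measurable (DN \<Otimes>\<^sub>M D1) DN" by (rule measurable_fst)
  have y: "(\<lambda>p. fst (snd (snd p (Suc n)))) \<in> measurable (DN \<Otimes>\<^sub>M D1) (count_space UNIV)"
    by (rule measurable_compose[OF sn_meas mY])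
  have yt: "(\<lambda>p. snd (snd (snd p (Suc n)))) \<in> measurable (DN \<Otimes>\<^sub>M D1) (count_space UNIV)"
    by (rule measurable_compose[OF sn_meas mYt])
  have x: "(\<lambda>p. fst (snd p (Suc n))) \<in> borel_measurable (DN \<Otimes>\<^sub>M D1)"
    by (rule measurable_compose[OF sn_meas mX])
  have pN: "Measurable.pred (DN \<Otimes>\<^sub>M D1) (\<lambda>p. NDp (fst p))" by (rule pred_NDp[OF Cal_sub f])
  have pT: "Measurable.pred (DN \<Otimes>\<^sub>M D1) (\<lambda>p. sc (fst p) (fst (snd p (Suc n))) k \<le> tauD (fst p) k)"
    by (rule pred_le_tau[OF Tsub Cal_sub k f x])
  have pY: "Measurable.pred (DN \<Otimes>\<^sub>M D1) (\<lambda>p. fst (snd (snd p (Suc n))) = k)"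
    using y by (rule pred_count_space_const1)
  have pYt: "Measurable.pred (DN \<Otimes>\<^sub>M D1) (\<lambda>p. snd (snd (snd p (Suc n))) = k)"
    using yt by (rule pred_count_space_const1)
  have "Measurable.pred (DN \<Otimes>\<^sub>M D1) (\<lambda>p. NDp (fst p) \<and> (fst (snd (snd p (Suc n))) = k \<and> sc (fst p) (fst (snd p (Suc n))) k \<le> tauD (fst p) k))"
    by (intro pred_intros_logic(3) pN pT pY)
  then show "RS (\<lambda>d. Bt d k) \<in> sets (DN \<Otimes>\<^sub>M D1)" unfolding RS_def Bt_def pred_def mem_Collect_eq .
  have "Measurable.pred (DN \<Otimes>\<^sub>M D1) (\<lambda>p. NDp (fst p) \<and> (snd (snd (snd p (Suc n))) = k \<and> sc (fst p) (fst (snd p (Suc n))) k \<le> tauD (fst p) k))"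
    by (intro pred_intros_logic(3) pN pT pYt)
  then show "RS (\<lambda>d. Bo d k) \<in> sets (DN \<Otimes>\<^sub>M D1)" unfolding RS_def Bo_def pred_def mem_Collect_eq .
  have "Measurable.pred (DN \<Otimes>\<^sub>M D1) (\<lambda>p. NDp (fst p) \<and> fst (snd (snd p (Suc n))) = k)"
    by (intro pred_intros_logic(3) pN pY)
  then show "RS (\<lambda>d. {t. fst (snd t) = k}) \<in> sets (DN \<Otimes>\<^sub>M D1)" unfolding RS_def pred_def mem_Collect_eq .
  have "Measurable.pred (DN \<Otimes>\<^sub>M D1) (\<lambda>p. NDp (fst p) \<and> snd (snd (snd p (Suc n))) = k)"
    by (intro pred_intros_logic(3) pN pYt)
  then show "RS (\<lambda>d. {t. snd (snd t) = k}) \<in> sets (DN \<Otimes>\<^sub>M D1)" unfolding RS_def pred_def mem_Collect_eq .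
qed

lemma section_RS:
  assumes d: "d \<in> space DN" and B: "B d \<in> sets P"
  shows "emeasure P1 (Pair d -` RS B) = (if NDp d then emeasure P (B d) else 0)"
proof -
  have sp: "space P1 = space D1" by (simp add: space_PiM space_P space_TS)
  have "Pair d -` RS B = (if NDp d then {f \<in> space P1. f (Suc n) \<in> B d} else {})"
    using d by (auto simp: RS_def space_pair_measure sp)
  then show ?thesis using P1_comp[OF B] by simp
qed

end


context cp begin

definition "NN = {\<omega> \<in> space M. NDp (W \<omega>)}"

lemma NN_sets: "NN \<in> sets M"
proof -
  have "Measurable.pred M (\<lambda>\<omega>. NDp (W \<omega>))" by (rule pred_NDp[OF Cal_sub W_meas])
  then show ?thesis by (simp add: NN_def pred_def)
qed

lemma W_space: "\<omega> \<in> space M \<Longrightarrow> W \<omega> \<in> space DN"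
  using W_meas by (rule measurable_space)

lemma WV_space: "\<omega> \<in> space M \<Longrightarrow> (W \<omega>, V \<omega>) \<in> space (DN \<Otimes>\<^sub>M D1)"
  using W_meas V_meas by (auto simp: space_pair_measure intro: measurable_space)

lemma Zall_space: "Zall \<omega> \<in> space (DD I)"
  by (simp add: Zall_def space_PiM space_TS)

lemma Zall_Sucn: "Zall \<omega> (Suc n) = Z (Suc n) \<omega>" by (simp add: Zall_def Sucn_I)

lemma Ao_Gs: "\<omega> \<in> space M \<Longrightarrow> (W \<omega>, V \<omega>) \<in> RS (\<lambda>d. Bo d k) \<longleftrightarrow> Zall \<omega> \<in> Gs k"
  using agree[OF Zall_W[of \<omega>]] WV_space[of \<omega>] Zall_space[of \<omega>]
  by (simp add: RS_def Bo_def Gs_def V_app Zall_Sucn lab_def) blast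

lemma Ho_Hs: "\<omega> \<in> space M \<Longrightarrow> (W \<omega>, V \<omega>) \<in> RS (\<lambda>d. {t. snd (snd t) = k}) \<longleftrightarrow> Zall \<omega> \<in> Hs k"
  using agree[OF Zall_W[of \<omega>]] WV_space[of \<omega>] Zall_space[of \<omega>]
  by (simp add: RS_def Hs_def V_app Zall_Sucn lab_def) blast

lemma emeas_Zall:
  assumes A: "A \<in> sets QQ"
  shows "emeasure M {\<omega>\<in>space M. Zall \<omega> \<in> A} = emeasure QQ A"
proof -
  have A': "A \<in> sets (DD I)" using A sets_QQ by simp
  have "emeasure QQ A = emeasure (distr M (DD I) Zall) A" by (simp add: distr_Zall)
  also have "\<dots> = emeasure M (Zall -` A \<inter> space M)" using A' Zall_meas by (rule emeasure_distr[rotated])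
  finally show ?thesis by (simp add: vimage_def Int_def conj_commute)
qed

lemma emeas_const:
  assumes B: "B \<in> sets P" and R: "RS (\<lambda>d. B) \<in> sets (DN \<Otimes>\<^sub>M D1)"
  shows "emeasure M {\<omega>\<in>space M. (W \<omega>, V \<omega>) \<in> RS (\<lambda>d. B)} = emeasure P B * emeasure M NN"
proof -
  have "emeasure M {\<omega>\<in>space M. (W \<omega>, V \<omega>) \<in> RS (\<lambda>d. B)} = (\<integral>\<^sup>+\<omega>. emeasure P1 (Pair (W \<omega>) -` RS (\<lambda>d. B)) \<partial>M)"
    by (rule fubini[OF R])
  also have "\<dots> = (\<integral>\<^sup>+\<omega>. emeasure P B * indicator NN \<omega> \<partial>M)"
  proof (rule nn_integral_cong)
    fix \<omega> assume "\<omega> \<in> space M"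
    then show "emeasure P1 (Pair (W \<omega>) -` RS (\<lambda>d. B)) = emeasure P B * indicator NN \<omega>"
      using section_RS[OF W_space, of \<omega> "\<lambda>d. B"] B by (simp add: NN_def indicator_def)
  qed
  also have "\<dots> = emeasure P B * emeasure M NN" by (rule nn_integral_cmult_indicator[OF NN_sets])
  finally show ?thesis .
qed

end


context cp begin

lemma sec_meas:
  assumes R: "R \<in> sets (DN \<Otimes>\<^sub>M D1)"
  shows "(\<lambda>\<omega>. emeasure P1 (Pair (W \<omega>) -` R)) \<in> borel_measurable M"
proof -
  interpret PP: prob_space P1 by (rule prob_space_PiM) (rule prob_P)
  have s: "sets (DN \<Otimes>\<^sub>M P1) = sets (DN \<Otimes>\<^sub>M D1)"
    by (intro sets_pair_measure_cong sets_PiM_cong) (auto simp: sets_P)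
  have "(\<lambda>d. emeasure P1 (Pair d -` R)) \<in> borel_measurable DN"
    using R s by (intro PP.measurable_emeasure_Pair) simp
  then show ?thesis using W_meas by (intro measurable_compose[OF W_meas]) auto
qed

lemma part2_main:
  assumes hyp: "AE \<omega> in M. \<omega> \<in> {\<omega>\<in>space M. \<forall>k\<in>{1..K}. card {i \<in> {1..n} - T. Yt i \<omega> = k} = nk k} \<longrightarrow>
           (\<forall>k\<in>{1..K}. \<forall>l\<in>{1..K}. \<forall>t::real. l \<noteq> k \<longrightarrow>
              cdf_true P (\<lambda>x. conf_score C (train_data X Yt T \<omega>) x k) l t
                \<le> cdf_true P (\<lambda>x. conf_score C (train_data X Yt T \<omega>) x k) k t)"
    and k: "k \<in> {1..K}"
  shows "(1-\<alpha>) * measure M {\<omega>\<in>space M. (W \<omega>, V \<omega>) \<in> RS (\<lambda>d. {t. fst (snd t) = k})}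
       \<le> measure M {\<omega>\<in>space M. (W \<omega>, V \<omega>) \<in> RS (\<lambda>d. Bt d k)}"
proof -
  interpret PSM: prob_space M by (rule PS)
  interpret PP: prob_space P by (rule prob_P)
  interpret Q: prob_space QQ by (rule QQ_prob)
  define py where "py = measure P {t. fst (snd t) = k}"
  define po where "po = measure P {t. snd (snd t) = k}"
  have py: "py > 0" using posY k by (simp add: py_def space_P)
  have po: "po > 0" using posYt k by (simp add: po_def space_P)
  define c where "c = py / po"
  have c0: "c \<ge> 0" using py po by (simp add: c_def)
  note RSs = RS_sets[OF k]
  have Bty: "{t. fst (snd t) = (k::nat)} \<in> sets P"
    using TS_sets[of UNIV "{k}" UNIV] by (simp add: sets_P)
  have Bto: "{t. snd (snd t) = (k::nat)} \<in> sets P"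
    using TS_sets[of UNIV UNIV "{k}"] by (simp add: sets_P)
  have AEc: "AE \<omega> in M. ennreal c * emeasure P1 (Pair (W \<omega>) -` RS (\<lambda>d. Bo d k))
                 \<le> emeasure P1 (Pair (W \<omega>) -` RS (\<lambda>d. Bt d k))"
    using hyp
  proof (rule AE_mp[OF _ AE_I2], intro impI)
    fix \<omega> assume \<omega>: "\<omega> \<in> space M"
      and h: "\<omega> \<in> {\<omega>\<in>space M. \<forall>k\<in>{1..K}. card {i \<in> {1..n} - T. Yt i \<omega> = k} = nk k} \<longrightarrow>
           (\<forall>k\<in>{1..K}. \<forall>l\<in>{1..K}. \<forall>t::real. l \<noteq> k \<longrightarrow>
              cdf_true P (\<lambda>x. conf_score C (train_data X Yt T \<omega>) x k) l t
                \<le> cdf_true P (\<lambda>x. conf_score C (train_data X Yt T \<omega>) x k) k t)"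
    define d where "d = W \<omega>"
    have d: "d \<in> space DN" using W_space[OF \<omega>] by (simp add: d_def)
    have st: "emeasure P1 (Pair d -` RS (\<lambda>d. Bt d k)) = (if NDp d then emeasure P (Bt d k) else 0)"
      by (rule section_RS[OF d B_sets(1)[OF k]])
    have so: "emeasure P1 (Pair d -` RS (\<lambda>d. Bo d k)) = (if NDp d then emeasure P (Bo d k) else 0)"
      by (rule section_RS[OF d B_sets(2)[OF k]])
    show "ennreal c * emeasure P1 (Pair (W \<omega>) -` RS (\<lambda>d. Bo d k))
                 \<le> emeasure P1 (Pair (W \<omega>) -` RS (\<lambda>d. Bt d k))"
    proof (cases "NDp d")
      case False
      then show ?thesis using st so by (simp add: d_def)
    next
      case True
      then have "\<omega> \<in> {\<omega>\<in>space M. \<forall>k\<in>{1..K}. card {i \<in> {1..n} - T. Yt i \<omega> = k} = nk k}"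
        using \<omega> N_W by (simp add: d_def)
      with h have h2: "\<forall>l\<in>{1..K}. \<forall>t::real. l \<noteq> k \<longrightarrow>
              cdf_true P (\<lambda>x. sc d x k) l t \<le> cdf_true P (\<lambda>x. sc d x k) k t"
        using k by (simp add: train_W sc_def[abs_def] d_def)
      have g: "(\<lambda>x. sc d x k) \<in> borel_measurable borel"
        unfolding sc_def by (rule g_meas[OF trD_space k])
      have le: "cdf_obs P (\<lambda>x. sc d x k) k (tauD d k) \<le> cdf_true P (\<lambda>x. sc d x k) k (tauD d k)"
        by (rule part1[OF g k]) (use h2 in blast)
      have et: "cdf_true P (\<lambda>x. sc d x k) k (tauD d k) = measure P (Bt d k) / py"
        unfolding cdf_true_def py_def Bt_def space_P by (simp add: conj_commute)
      have eo: "cdf_obs P (\<lambda>x. sc d x k) k (tauD d k) = measure P (Bo d k) / po"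
        unfolding cdf_obs_def po_def Bo_def space_P by (simp add: conj_commute)
      have "measure P (Bo d k) / po \<le> measure P (Bt d k) / py" using le et eo by simp
      then have "c * measure P (Bo d k) \<le> measure P (Bt d k)"
        using py po by (simp add: c_def field_simps)
      then have "ennreal (c * measure P (Bo d k)) \<le> ennreal (measure P (Bt d k))"
        by (rule ennreal_leI)
      then show ?thesis using st so True c0
        by (simp add: d_def PP.emeasure_eq_measure ennreal_mult)
    qed
  qed
  have "emeasure M {\<omega>\<in>space M. (W \<omega>, V \<omega>) \<in> RS (\<lambda>d. Bt d k)}
      = (\<integral>\<^sup>+\<omega>. emeasure P1 (Pair (W \<omega>) -` RS (\<lambda>d. Bt d k)) \<partial>M)"
    by (rule fubini[OF RSs(1)])
  also have "\<dots> \<ge> (\<integral>\<^sup>+\<omega>. ennreal c * emeasure P1 (Pair (W \<omega>) -` RS (\<lambda>d. Bo d k)) \<partial>M)"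
    by (rule nn_integral_mono_AE[OF AEc])
  also have "(\<integral>\<^sup>+\<omega>. ennreal c * emeasure P1 (Pair (W \<omega>) -` RS (\<lambda>d. Bo d k)) \<partial>M)
      = ennreal c * (\<integral>\<^sup>+\<omega>. emeasure P1 (Pair (W \<omega>) -` RS (\<lambda>d. Bo d k)) \<partial>M)"
    by (rule nn_integral_cmult[OF sec_meas[OF RSs(2)]])
  also have "(\<integral>\<^sup>+\<omega>. emeasure P1 (Pair (W \<omega>) -` RS (\<lambda>d. Bo d k)) \<partial>M)
      = emeasure M {\<omega>\<in>space M. (W \<omega>, V \<omega>) \<in> RS (\<lambda>d. Bo d k)}"
    by (rule fubini[OF RSs(2), symmetric])
  also have "{\<omega>\<in>space M. (W \<omega>, V \<omega>) \<in> RS (\<lambda>d. Bo d k)} = {\<omega>\<in>space M. Zall \<omega> \<in> Gs k}"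
    using Ao_Gs by auto
  also have "emeasure M {\<omega>\<in>space M. Zall \<omega> \<in> Gs k} = emeasure QQ (Gs k)"
    by (rule emeas_Zall[OF Gs_sets(1)[OF k]])
  finally have I1: "ennreal c * emeasure QQ (Gs k) \<le> emeasure M {\<omega>\<in>space M. (W \<omega>, V \<omega>) \<in> RS (\<lambda>d. Bt d k)}" .
  have I2: "emeasure QQ (Hs k) = ennreal po * emeasure M NN"
  proof -
    have "emeasure QQ (Hs k) = emeasure M {\<omega>\<in>space M. Zall \<omega> \<in> Hs k}"
      by (rule emeas_Zall[OF Gs_sets(2)[OF k], symmetric])
    also have "{\<omega>\<in>space M. Zall \<omega> \<in> Hs k} = {\<omega>\<in>space M. (W \<omega>, V \<omega>) \<in> RS (\<lambda>d. {t. snd (snd t) = k})}"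
      using Ho_Hs by auto
    also have "emeasure M \<dots> = emeasure P {t. snd (snd t) = k} * emeasure M NN"
      by (rule emeas_const[OF Bto RSs(4)])
    finally show ?thesis by (simp add: po_def PP.emeasure_eq_measure)
  qed
  have I3: "emeasure M {\<omega>\<in>space M. (W \<omega>, V \<omega>) \<in> RS (\<lambda>d. {t. fst (snd t) = k})} = ennreal py * emeasure M NN"
    using emeas_const[OF Bty RSs(3)] by (simp add: py_def PP.emeasure_eq_measure)
  define mt where "mt = measure M {\<omega>\<in>space M. (W \<omega>, V \<omega>) \<in> RS (\<lambda>d. Bt d k)}"
  define my where "my = measure M {\<omega>\<in>space M. (W \<omega>, V \<omega>) \<in> RS (\<lambda>d. {t. fst (snd t) = k})}"
  define mN where "mN = measure M NN"
  have r1: "c * measure QQ (Gs k) \<le> mt"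
    using I1 c0 by (simp add: mt_def Q.emeasure_eq_measure PSM.emeasure_eq_measure ennreal_mult[symmetric])
  have r2: "measure QQ (Hs k) = po * mN"
    using I2 po by (simp add: mN_def Q.emeasure_eq_measure PSM.emeasure_eq_measure ennreal_mult[symmetric])
  have r3: "my = py * mN"
    using I3 py by (simp add: my_def mN_def PSM.emeasure_eq_measure ennreal_mult[symmetric])
  have ex: "(1-\<alpha>) * measure QQ (Hs k) \<le> measure QQ (Gs k)" by (rule exch[OF k])
  have "(1-\<alpha>) * my = c * ((1-\<alpha>) * measure QQ (Hs k))"
    using r2 r3 po by (simp add: c_def field_simps)
  also have "\<dots> \<le> c * measure QQ (Gs k)" using ex c0 by (rule mult_left_mono)
  also have "\<dots> \<le> mt" by (rule r1)
  finally show ?thesis by (simp add: my_def mt_def)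
qed

end


context cp begin

lemma NN_pos: "measure M NN > 0"
proof -
  interpret PSM: prob_space M by (rule PS)
  interpret PP: prob_space P by (rule prob_P)
  interpret Q: prob_space QQ by (rule QQ_prob)
  have "card Cal = (\<Sum>l\<in>{1..K}. nk l)" using nksum by (simp add: Cal_def)
  then obtain f where f: "f ` Cal \<subseteq> {1..K}" "\<forall>l\<in>{1..K}. card {i\<in>Cal. f i = l} = nk l"
    using exists_assignment[of "{1..K}" Cal nk] finite_Cal by auto
  define E where "E i = {t :: (real ^ 'd) \<times> nat \<times> nat. snd (snd t) = f i}" for i
  have Es: "E i \<in> sets P" for i
    using TS_sets[of UNIV UNIV "{f i}"] by (simp add: sets_P E_def)
  define S where "S = prod_emb I (\<lambda>_. P) Cal (Pi\<^sub>E Cal E)"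
  have S: "S \<in> sets QQ" unfolding S_def using finite_Cal Cal_I Es by (intro sets_PiM_I) auto
  have "emeasure QQ S = (\<Prod>i\<in>Cal. emeasure P (E i))"
    unfolding S_def using finite_Cal Cal_I Es by (intro emeasure_PiM_emb) (auto simp: prob_P)
  then have e: "ennreal (measure QQ S) = ennreal (\<Prod>i\<in>Cal. measure P (E i))"
    by (simp add: Q.emeasure_eq_measure PP.emeasure_eq_measure prod_ennreal)
  have mS: "measure QQ S = (\<Prod>i\<in>Cal. measure P (E i))"
    using e by (subst (asm) ennreal_inj) (auto intro!: prod_nonneg)
  have "\<forall>i\<in>Cal. measure P (E i) > 0"
    using posYt f(1) by (auto simp: E_def space_P)
  then have pS: "measure QQ S > 0" unfolding mS by (intro prod_pos) auto
  have sub: "{\<omega>\<in>space M. Zall \<omega> \<in> S} \<subseteq> NN"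
  proof
    fix \<omega> assume "\<omega> \<in> {\<omega>\<in>space M. Zall \<omega> \<in> S}"
    then have \<omega>: "\<omega> \<in> space M" and zs: "Zall \<omega> \<in> S" by auto
    have "\<forall>i\<in>Cal. lab (Zall \<omega>) i = f i"
      using zs by (auto simp: S_def prod_emb_def E_def lab_def)
    then have "{i\<in>Cal. lab (Zall \<omega>) i = l} = {i\<in>Cal. f i = l}" for l by auto
    then have "NDp (Zall \<omega>)" using f(2) by (simp add: NDp_def)
    then have "NDp (W \<omega>)" using agree(2)[OF Zall_W[of \<omega>]] by simp
    then show "\<omega> \<in> NN" using \<omega> by (simp add: NN_def)
  qed
  have "measure M {\<omega>\<in>space M. Zall \<omega> \<in> S} = measure QQ S"
    using emeas_Zall[OF S] by (simp add: Q.emeasure_eq_measure PSM.emeasure_eq_measure)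
  moreover have "measure M {\<omega>\<in>space M. Zall \<omega> \<in> S} \<le> measure M NN"
    using sub NN_sets by (intro PSM.finite_measure_mono) auto
  ultimately show ?thesis using pS by simp
qed

lemma den_pos:
  assumes k: "k \<in> {1..K}"
  shows "measure M {\<omega>\<in>space M. (W \<omega>, V \<omega>) \<in> RS (\<lambda>d. {t. fst (snd t) = k})} > 0"
proof -
  interpret PSM: prob_space M by (rule PS)
  interpret PP: prob_space P by (rule prob_P)
  have Bty: "{t. fst (snd t) = (k::nat)} \<in> sets P"
    using TS_sets[of UNIV "{k}" UNIV] by (simp add: sets_P)
  have "emeasure M {\<omega>\<in>space M. (W \<omega>, V \<omega>) \<in> RS (\<lambda>d. {t. fst (snd t) = k})}
      = emeasure P {t. fst (snd t) = k} * emeasure M NN"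
    by (rule emeas_const[OF Bty RS_sets(3)[OF k]])
  then have "measure M {\<omega>\<in>space M. (W \<omega>, V \<omega>) \<in> RS (\<lambda>d. {t. fst (snd t) = k})}
      = measure P {t. fst (snd t) = k} * measure M NN"
    by (simp add: PSM.emeasure_eq_measure PP.emeasure_eq_measure ennreal_mult[symmetric])
  moreover have "measure P {t. fst (snd t) = k} > 0" using posY k by (simp add: space_P)
  ultimately show ?thesis using NN_pos by simp
qed

lemma coverage:
  assumes hyp: "AE \<omega> in M. \<omega> \<in> {\<omega>\<in>space M. \<forall>k\<in>{1..K}. card {i \<in> {1..n} - T. Yt i \<omega> = k} = nk k} \<longrightarrow>
           (\<forall>k\<in>{1..K}. \<forall>l\<in>{1..K}. \<forall>t::real. l \<noteq> k \<longrightarrow>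
              cdf_true P (\<lambda>x. conf_score C (train_data X Yt T \<omega>) x k) l t
                \<le> cdf_true P (\<lambda>x. conf_score C (train_data X Yt T \<omega>) x k) k t)"
    and k: "k \<in> {1..K}"
  shows "cond_prob M
              (\<lambda>\<omega>. Y (Suc n) \<omega> \<in> C (train_data X Yt T \<omega>) (X (Suc n) \<omega>)
                                    (lc_threshold \<alpha> C X Yt T ({1..n} - T) \<omega>))
              (\<lambda>\<omega>. Y (Suc n) \<omega> = k \<and> \<omega> \<in> {\<omega>\<in>space M. \<forall>k\<in>{1..K}. card {i \<in> {1..n} - T. Yt i \<omega> = k} = nk k}) \<ge> 1 - \<alpha>"
proof -
  let ?N = "{\<omega>\<in>space M. \<forall>k\<in>{1..K}. card {i \<in> {1..n} - T. Yt i \<omega> = k} = nk k}"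
  have Nw: "\<omega> \<in> ?N \<longleftrightarrow> \<omega> \<in> space M \<and> NDp (W \<omega>)" for \<omega>
    using N_W by blast
  have scon: "\<forall>D x \<tau> k. \<tau> \<in> tau_box K \<longrightarrow> k \<in> {1..K} \<longrightarrow> (k \<in> C D x \<tau> \<longleftrightarrow> conf_score C D x k \<le> \<tau> k)"
    using SC unfolding score_consistent_def .
  have box: "tauD d \<in> tau_box K" for d unfolding tau_box_def using tau_01 by fastforce
  have num: "{\<omega>\<in>space M. Y (Suc n) \<omega> \<in> C (train_data X Yt T \<omega>) (X (Suc n) \<omega>) (lc_threshold \<alpha> C X Yt T ({1..n} - T) \<omega>)
        \<and> (Y (Suc n) \<omega> = k \<and> \<omega> \<in> ?N)} = {\<omega>\<in>space M. (W \<omega>, V \<omega>) \<in> RS (\<lambda>d. Bt d k)}"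
  proof (intro Collect_cong conj_cong refl)
    fix \<omega> assume \<omega>: "\<omega> \<in> space M"
    have "(Y (Suc n) \<omega> \<in> C (trD (W \<omega>)) (X (Suc n) \<omega>) (tauD (W \<omega>)) \<and> Y (Suc n) \<omega> = k \<and> NDp (W \<omega>))
        = (conf_score C (trD (W \<omega>)) (X (Suc n) \<omega>) k \<le> tauD (W \<omega>) k \<and> Y (Suc n) \<omega> = k \<and> NDp (W \<omega>))"
      using scon box k by blast
    then show "(Y (Suc n) \<omega> \<in> C (train_data X Yt T \<omega>) (X (Suc n) \<omega>) (lc_threshold \<alpha> C X Yt T ({1..n} - T) \<omega>)
        \<and> (Y (Suc n) \<omega> = k \<and> \<omega> \<in> ?N)) = ((W \<omega>, V \<omega>) \<in> RS (\<lambda>d. Bt d k))"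
      unfolding train_W lc_W using \<omega> WV_space[OF \<omega>] Nw[of \<omega>]
      by (auto simp: RS_def Bt_def V_app Z_def sc_def)
  qed
  have den: "{\<omega>\<in>space M. Y (Suc n) \<omega> = k \<and> \<omega> \<in> ?N} = {\<omega>\<in>space M. (W \<omega>, V \<omega>) \<in> RS (\<lambda>d. {t. fst (snd t) = k})}"
    using WV_space Nw by (auto simp: RS_def V_app Z_def)
  have m: "(1-\<alpha>) * measure M {\<omega>\<in>space M. (W \<omega>, V \<omega>) \<in> RS (\<lambda>d. {t. fst (snd t) = k})}
       \<le> measure M {\<omega>\<in>space M. (W \<omega>, V \<omega>) \<in> RS (\<lambda>d. Bt d k)}"
    by (rule part2_main[OF hyp k])
  show ?thesis
    unfolding cond_prob_def num den using m den_pos[OF k] by (simp add: le_divide_eq)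
qed

end


theorem corollary3:
  fixes K n :: nat and \<alpha> :: real
    and M :: "'w measure"
    and X :: "nat \<Rightarrow> 'w \<Rightarrow> real ^ 'd"
    and Y Yt :: "nat \<Rightarrow> 'w \<Rightarrow> nat"
    and T :: "nat set"
    and nk :: "nat \<Rightarrow> nat"
    and C :: "(real ^ 'd) tdata \<Rightarrow> real ^ 'd \<Rightarrow> (nat \<Rightarrow> real) \<Rightarrow> nat set"
  defines "P \<equiv> distr M triple_space (\<lambda>\<omega>. (X 1 \<omega>, Y 1 \<omega>, Yt 1 \<omega>))"
      and "N \<equiv> {\<omega> \<in> space M. \<forall>k\<in>{1..K}. card {i \<in> {1..n} - T. Yt i \<omega> = k} = nk k}"
  assumes "K \<ge> 2" and "n \<ge> 2" and "0 < \<alpha>" and "\<alpha> < 1"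
    and "prob_space M"
    (* i.i.d. triples (X_i, Y_i, Ytilde_i), i = 1..n+1 *)
    and "prob_space.indep_vars M (\<lambda>_. triple_space) (\<lambda>i \<omega>. (X i \<omega>, Y i \<omega>, Yt i \<omega>)) {1..Suc n}"
    and "\<forall>i\<in>{1..Suc n}. distr M triple_space (\<lambda>\<omega>. (X i \<omega>, Y i \<omega>, Yt i \<omega>)) = P"
    and "\<forall>i\<in>{1..Suc n}. \<forall>\<omega>\<in>space M. Y i \<omega> \<in> {1..K} \<and> Yt i \<omega> \<in> {1..K}"
    (* Assumption 1 *)
    and "cond_indep_obs P (sets borel)"
    and "\<forall>l\<in>{1..K}. measure P {z \<in> space P. fst (snd z) = l} > 0"
    and "\<forall>l\<in>{1..K}. measure P {z \<in> space P. snd (snd z) = l} > 0"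
    (* data split, fixed and nonempty *)
    and "T \<subseteq> {1..n}" and "T \<noteq> {}" and "{1..n} - T \<noteq> {}"
    (* fixed class counts in the calibration set *)
    and "\<forall>k\<in>{1..K}. nk k \<ge> 1" and "(\<Sum>k\<in>{1..K}. nk k) = card ({1..n} - T)"
    (* prediction function and its score *)
    and "prediction_function K C" and "score_consistent K C"
    and "\<forall>k\<in>{1..K}. (\<lambda>p. conf_score C (fst p) (snd p) k)
            \<in> borel_measurable (PiM T (\<lambda>_. (borel :: (real ^ 'd) measure) \<Otimes>\<^sub>M count_space UNIV) \<Otimes>\<^sub>M borel)"
    (* hypothesis: a.s. max_{l \<noteq> k} F^k_l(t) \<le> F^k_k(t) *)
    and "AE \<omega> in M. \<omega> \<in> N \<longrightarrow>
           (\<forall>k\<in>{1..K}. \<forall>l\<in>{1..K}. \<forall>t::real. l \<noteq> k \<longrightarrow>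
              cdf_true P (\<lambda>x. conf_score C (train_data X Yt T \<omega>) x k) l t
                \<le> cdf_true P (\<lambda>x. conf_score C (train_data X Yt T \<omega>) x k) k t)"
  shows "(AE \<omega> in M. \<omega> \<in> N \<longrightarrow>
            (\<forall>k\<in>{1..K}.
               cdf_true P (\<lambda>x. conf_score C (train_data X Yt T \<omega>) x k) k
                   (lc_threshold \<alpha> C X Yt T ({1..n} - T) \<omega> k)
                 - cdf_obs P (\<lambda>x. conf_score C (train_data X Yt T \<omega>) x k) k
                   (lc_threshold \<alpha> C X Yt T ({1..n} - T) \<omega> k) \<ge> 0))
       \<and> (\<forall>k\<in>{1..K}.
            cond_prob M
              (\<lambda>\<omega>. Y (Suc n) \<omega> \<in> C (train_data X Yt T \<omega>) (X (Suc n) \<omega>)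
                                    (lc_threshold \<alpha> C X Yt T ({1..n} - T) \<omega>))
              (\<lambda>\<omega>. Y (Suc n) \<omega> = k \<and> \<omega> \<in> N) \<ge> 1 - \<alpha>)"
proof -
  have cpI: "cp K n \<alpha> M X Y Yt T nk C P"
  proof (rule cp.intro)
    show "P = distr M triple_space (\<lambda>\<omega>. (X 1 \<omega>, Y 1 \<omega>, Yt 1 \<omega>))" by (simp add: P_def)
  qed (fact assms)+
  interpret cp K n \<alpha> M X Y Yt T nk C P by (rule cpI)
  have hyp: "AE \<omega> in M. \<omega> \<in> {\<omega>\<in>space M. \<forall>k\<in>{1..K}. card {i \<in> {1..n} - T. Yt i \<omega> = k} = nk k} \<longrightarrow>
           (\<forall>k\<in>{1..K}. \<forall>l\<in>{1..K}. \<forall>t::real. l \<noteq> k \<longrightarrow>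
              cdf_true P (\<lambda>x. conf_score C (train_data X Yt T \<omega>) x k) l t
                \<le> cdf_true P (\<lambda>x. conf_score C (train_data X Yt T \<omega>) x k) k t)"
    using assms(22) unfolding N_def .
  show ?thesis
  proof
    show "AE \<omega> in M. \<omega> \<in> N \<longrightarrow>
            (\<forall>k\<in>{1..K}.
               cdf_true P (\<lambda>x. conf_score C (train_data X Yt T \<omega>) x k) k
                   (lc_threshold \<alpha> C X Yt T ({1..n} - T) \<omega> k)
                 - cdf_obs P (\<lambda>x. conf_score C (train_data X Yt T \<omega>) x k) k
                   (lc_threshold \<alpha> C X Yt T ({1..n} - T) \<omega> k) \<ge> 0)"
      by (rule part1_thm[OF assms(22)])
    show "\<forall>k\<in>{1..K}.
            cond_prob M
              (\<lambda>\<omega>. Y (Suc n) \<omega> \<in> C (train_data X Yt T \<omega>) (X (Suc n) \<omega>)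
                                    (lc_threshold \<alpha> C X Yt T ({1..n} - T) \<omega>))
              (\<lambda>\<omega>. Y (Suc n) \<omega> = k \<and> \<omega> \<in> N) \<ge> 1 - \<alpha>"
      unfolding N_def using coverage[OF hyp] by blast
  qed
qed


end
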